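(* Let $Z>0$. Let $\nu\mapsto\kappa_\nu$, $\nu\mapsto a^i_\nu$, $\nu\mapsto a^r_\nu$ be measurable on $(0,\infty)$ with $0<\kappa_\nu\le\kappa_M$ for some constant $\kappa_M$, $a^i_\nu,a^r_\nu\ge0$ and $a_\nu:=a^i_\nu+a^r_\nu<1$ for all $\nu>0$. Let $Q^\pm_\nu(\mu)$ be measurable on $(0,1)\times(0,\infty)$ and suppose there are constants $T_M>0$, $Q>0$ with $$0\le Q^\pm_\nu(\mu)\le Q\,B_\nu(T_M)\quad\text{for all }(\mu,\nu)\in(0,1)\times(0,\infty).$$ Define $I^0_\nu=0$, $T^0=0$, and for $n\ge0$ let $I^{n+1}_\nu(\tau,\mu)$ be the mild solution on $(0,Z)\times(-1,1)\times(0,\infty)$ of $$(\mu\partial_\tau+\kappa_\nu)I^{n+1}_\nu=\kappa_\nu(1-a_\nu)B_\nu(T^n(\tau))+\kappa_\nu a^i_\nu J^n_\nu(\tau)+\tfrac38\kappa_\nu a^r_\nu\big((3-\mu^2)J^n_\nu(\tau)+(3\mu^2-1)K^n_\nu(\tau)\big),$$ $$I^{n+1}_\nu(0,\mu)=Q^+_\nu(\mu),\quad I^{n+1}_\nu(Z,-\mu)=Q^-_\nu(\mu),\quad 0<\mu<1,$$ and set $T^{n+1}=T[J^{n+1}]$. Then the sequences are monotone nondecreasing, $I^n_\nu\le I^{n+1}_\nu$ and $T^n\le T^{n+1}$ pointwise, and $I^n_\nu\to I_\nu$, $T^n\to T$ pointwise, where $(I_\nu,T)$ is a mild solution of $$(\mu\partial_\tau+\kappa_\nu)I_\nu=\kappa_\nu(1-a_\nu)B_\nu(T(\tau))+\kappa_\nu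 a^i_\nu J_\nu(\tau)+\tfrac38\kappa_\nu a^r_\nu\big((3-\mu^2)J_\nu(\tau)+(3\mu^2-1)K_\nu(\tau)\big),$$ with the same boundary conditions and with $T=T[J]$, i.e. $\int_0^\infty\kappa_\nu(1-a_\nu)B_\nu(T(\tau))\,d\nu=\int_0^\infty\kappa_\nu(1-a_\nu)J_\nu(\tau)\,d\nu$.
   Context: Planck function: for $T>0$, $B_\nu(T)=\dfrac{2\hbar\nu^3}{c^2\,(e^{\hbar\nu/(kT)}-1)}$ with fixed positive constants $\hbar,c,k$, and $B_\nu(0)=0$; it is continuous and increasing in $T$ for each $\nu>0$. For an intensity $I_\nu(\tau,\mu)$: $J_\nu(\tau)=\tfrac12\int_{-1}^1I_\nu(\tau,\mu)d\mu$, $K_\nu(\tau)=\tfrac12\int_{-1}^1\mu^2I_\nu(\tau,\mu)d\mu$ (and $J^n,K^n$ are those of $I^n$). For nonnegative $J$ with $\int_0^\infty\kappa_\nu(1-a_\nu)J_\nu(\tau)d\nu<\infty$, $T[J](\tau)$ is the unique $T\ge0$ with $\int_0^\infty\kappa_\nu(1-a_\nu)B_\nu(T)d\nu=\int_0^\infty\kappa_\nu(1-a_\nu)J_\nu(\tau)d\nu$. "Mild solution" of $(\mu\partial_\tau+\kappa_\nu)I_\nu=S_\nu(\tau,\mu)$ with these boundary conditions means the characteristics formula holds: for $\mu>0$, $I_\nu(\tau,\mu)=e^{-\kappa_\nu\tau/\mu}Q^+_\nu(\mu)+\int_0^\tau e^{-\kappa_\nu(\tau-t)/\mu}\frac{1}{\mu}S_\nu(t,\mu)dt$;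 for $\mu<0$, $I_\nu(\tau,\mu)=e^{-\kappa_\nu(Z-\tau)/|\mu|}Q^-_\nu(|\mu|)+\int_\tau^Z e^{-\kappa_\nu(t-\tau)/|\mu|}\frac{1}{|\mu|}S_\nu(t,\mu)dt$. *)

theory Defs
  imports "HOL-Analysis.Analysis"
begin

definition planck :: "real \<Rightarrow> real \<Rightarrow> real \<Rightarrow> real \<Rightarrow> real \<Rightarrow> real" where
  "planck hb c kB \<nu> T =
     (if T > 0 then 2 * hb * \<nu> ^ 3 / (c ^ 2 * (exp (hb * \<nu> / (kB * T)) - 1)) else 0)"

definition Jmom :: "(real \<Rightarrow> real \<Rightarrow> real) \<Rightarrow> real \<Rightarrow> real" where
  "Jmom Iv \<tau> = 1/2 * (LINT \<mu>:{-1..1}|lborel. Iv \<tau> \<mu>)"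

definition Kmom :: "(real \<Rightarrow> real \<Rightarrow> real) \<Rightarrow> real \<Rightarrow> real" where
  "Kmom Iv \<tau> = 1/2 * (LINT \<mu>:{-1..1}|lborel. \<mu>^2 * Iv \<tau> \<mu>)"

text \<open>Temperature map T[J]: the unique T \<ge> 0 balancing the frequency-integrated emission.
  J is indexed as J \<nu> \<tau>; a = a^i + a^r.\<close>
definition Tof :: "real \<Rightarrow> real \<Rightarrow> real \<Rightarrow> (real \<Rightarrow> real) \<Rightarrow> (real \<Rightarrow> real)
                   \<Rightarrow> (real \<Rightarrow> real \<Rightarrow> real) \<Rightarrow> real \<Rightarrow> real" where
  "Tof hb c kB \<kappa> a J \<tau> =
     (THE T. T \<ge> 0 \<and>
        (\<integral>\<^sup>+ \<nu>. ennreal (\<kappa> \<nu> * (1 - a \<nu>) * planck hb c kB \<nu> T) * indicator {0<..} \<nu> \<partial>lborel)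
      = (\<integral>\<^sup>+ \<nu>. ennreal (\<kappa> \<nu> * (1 - a \<nu>) * J \<nu> \<tau>) * indicator {0<..} \<nu> \<partial>lborel))"

text \<open>Characteristics (mild solution) formula for source S \<nu> t \<mu> and boundary data
  Qp \<nu> \<mu>, Qm \<nu> \<mu> (\<mu> \<in> (0,1)). Value 0 at the irrelevant direction \<mu> = 0.\<close>
definition charsol :: "(real \<Rightarrow> real) \<Rightarrow> (real \<Rightarrow> real \<Rightarrow> real) \<Rightarrow> (real \<Rightarrow> real \<Rightarrow> real) \<Rightarrow> real
                       \<Rightarrow> (real \<Rightarrow> real \<Rightarrow> real \<Rightarrow> real) \<Rightarrow> real \<Rightarrow> real \<Rightarrow> real \<Rightarrow> real" where
  "charsol \<kappa> Qp Qm Z S \<nu> \<tau> \<mu> =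
     (if \<mu> > 0 then
        exp (- \<kappa> \<nu> * \<tau> / \<mu>) * Qp \<nu> \<mu>
        + (LINT t:{0..\<tau>}|lborel. exp (- \<kappa> \<nu> * (\<tau> - t) / \<mu>) * (1 / \<mu>) * S \<nu> t \<mu>)
      else if \<mu> < 0 then
        exp (- \<kappa> \<nu> * (Z - \<tau>) / \<bar>\<mu>\<bar>) * Qm \<nu> \<bar>\<mu>\<bar>
        + (LINT t:{\<tau>..Z}|lborel. exp (- \<kappa> \<nu> * (t - \<tau>) / \<bar>\<mu>\<bar>) * (1 / \<bar>\<mu>\<bar>) * S \<nu> t \<mu>)
      else 0)"

definition mild_solution :: "(real \<Rightarrow> real) \<Rightarrow> (real \<Rightarrow> real \<Rightarrow> real) \<Rightarrow> (real \<Rightarrow> real \<Rightarrow> real) \<Rightarrow> real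
                       \<Rightarrow> (real \<Rightarrow> real \<Rightarrow> real \<Rightarrow> real) \<Rightarrow> (real \<Rightarrow> real \<Rightarrow> real \<Rightarrow> real) \<Rightarrow> bool" where
  "mild_solution \<kappa> Qp Qm Z S I \<longleftrightarrow>
     (\<forall>\<nu> \<tau> \<mu>. \<nu> > 0 \<and> \<tau> \<in> {0..Z} \<and> \<mu> \<in> {-1<..<1} \<and> \<mu> \<noteq> 0 \<longrightarrow>
        I \<nu> \<tau> \<mu> = charsol \<kappa> Qp Qm Z S \<nu> \<tau> \<mu>)"

definition src :: "real \<Rightarrow> real \<Rightarrow> real \<Rightarrow> (real \<Rightarrow> real) \<Rightarrow> (real \<Rightarrow> real) \<Rightarrow> (real \<Rightarrow> real)
                   \<Rightarrow> (real \<Rightarrow> real \<Rightarrow> real \<Rightarrow> real) \<Rightarrow> (real \<Rightarrow> real) \<Rightarrow> real \<Rightarrow> real \<Rightarrow> real \<Rightarrow> real" where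
  "src hb c kB \<kappa> ai ar I T \<nu> \<tau> \<mu> =
     \<kappa> \<nu> * (1 - (ai \<nu> + ar \<nu>)) * planck hb c kB \<nu> (T \<tau>)
     + \<kappa> \<nu> * ai \<nu> * Jmom (I \<nu>) \<tau>
     + 3/8 * \<kappa> \<nu> * ar \<nu> * ((3 - \<mu>^2) * Jmom (I \<nu>) \<tau> + (3 * \<mu>^2 - 1) * Kmom (I \<nu>) \<tau>)"

primrec rte_iter :: "real \<Rightarrow> real \<Rightarrow> real \<Rightarrow> (real \<Rightarrow> real) \<Rightarrow> (real \<Rightarrow> real) \<Rightarrow> (real \<Rightarrow> real)
      \<Rightarrow> (real \<Rightarrow> real \<Rightarrow> real) \<Rightarrow> (real \<Rightarrow> real \<Rightarrow> real) \<Rightarrow> real \<Rightarrow> nat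
      \<Rightarrow> (real \<Rightarrow> real \<Rightarrow> real \<Rightarrow> real) \<times> (real \<Rightarrow> real)" where
  "rte_iter hb c kB \<kappa> ai ar Qp Qm Z 0 = ((\<lambda>\<nu> \<tau> \<mu>. 0), (\<lambda>\<tau>. 0))"
| "rte_iter hb c kB \<kappa> ai ar Qp Qm Z (Suc n) =
     (let I = fst (rte_iter hb c kB \<kappa> ai ar Qp Qm Z n);
          T = snd (rte_iter hb c kB \<kappa> ai ar Qp Qm Z n);
          I' = charsol \<kappa> Qp Qm Z (src hb c kB \<kappa> ai ar I T)
      in (I', Tof hb c kB \<kappa> (\<lambda>\<nu>. ai \<nu> + ar \<nu>) (\<lambda>\<nu> \<tau>. Jmom (I' \<nu>) \<tau>)))"

end

theory Submission
  imports Defs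
begin

lemma exp_scale_ineq:
  fixes s y :: real assumes "s \<ge> 1" "y \<ge> 0"
  shows "s * (exp y - 1) \<le> exp (s * y) - 1"
proof (cases "s = 1 \<or> y = 0")
  case True then show ?thesis by auto
next
  case False
  then have s1: "s > 1" and y0: "y > 0" using assms by auto
  have "(exp 0 - exp y) / (0 - y) \<le> (exp 0 - exp (s*y)) / (0 - s*y)"
    by (rule convex_on_slope_le(1)[OF exp_convex]) (use s1 y0 in auto)
  then have h: "(1 - exp (s*y))/(s*y) \<le> (1 - exp y)/y" by simp
  have sy: "s*y > 0" using s1 y0 by simp
  from h have "(1 - exp (s*y)) \<le> (1 - exp y)/y * (s*y)" using sy by (simp only: divide_le_eq)
  also have "(1 - exp y)/y * (s*y) = s * (1 - exp y)" using y0 by simp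
  finally show ?thesis by (simp add: algebra_simps)
qed

lemma planck0_lim:
  fixes a C d :: real assumes "a > 0" "d > 0"
  shows "((\<lambda>T. C/(d*(exp(a/T)-1))) \<longlongrightarrow> 0) (at_right 0)"
proof -
  have 1: "filterlim (\<lambda>T. a * inverse T) at_top (at_right (0::real))"
    by (rule filterlim_tendsto_pos_mult_at_top[OF tendsto_const assms(1) filterlim_inverse_at_top_right])
  have 2: "filterlim (\<lambda>T. exp (a/T)) at_top (at_right (0::real))"
    using filterlim_compose[OF exp_at_top 1] by (simp add: divide_inverse)
  have 3: "filterlim (\<lambda>T. exp (a/T) - 1) at_top (at_right (0::real))"
    by (rule filterlim_tendsto_add_at_top[where c="-1" and f="\<lambda>_. -1", simplified, OF 2])
  have 4: "filterlim (\<lambda>T. d*(exp (a/T) - 1)) at_top (at_right (0::real))"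
    by (rule filterlim_tendsto_pos_mult_at_top[OF tendsto_const assms(2) 3])
  show ?thesis
    by (rule tendsto_divide_0[OF tendsto_const filterlim_at_top_imp_at_infinity[OF 4]])
qed

lemma one_plus_pow_ge: fixes y :: real assumes "y \<ge> 0" shows "1 + y^(Suc n) \<le> (1+y)^(Suc n)"
proof (induction n)
  case 0 then show ?case by simp
next
  case (Suc n)
  have "1 + y^(Suc (Suc n)) \<le> (1+y) * (1 + y^(Suc n))" using assms by (simp add: algebra_simps)
  also have "\<dots> \<le> (1+y) * (1+y)^(Suc n)" using Suc assms by (intro mult_left_mono) auto
  finally show ?case by simp
qed

lemma exp_ge_pow5: fixes x :: real assumes "x \<ge> 0" shows "(x/5)^5 \<le> exp x - 1"
proof -
  have e: "exp x = exp (x/5) ^ 5" using exp_of_nat_mult[of 5 "x/5"] by simp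
  have "(1 + x/5)^5 \<le> exp (x/5) ^ 5"
    by (rule power_mono) (use exp_ge_add_one_self[of "x/5"] assms in auto)
  moreover have "1 + (x/5)^5 \<le> (1 + x/5)^5" using one_plus_pow_ge[of "x/5" 4] assms by (simp add: numeral_eq_Suc)
  ultimately show ?thesis using e by linarith
qed

lemma planck_nonneg: "hb > 0 \<Longrightarrow> kB > 0 \<Longrightarrow> \<nu> \<ge> 0 \<Longrightarrow> 0 \<le> planck hb c kB \<nu> T"
  unfolding planck_def by (auto intro!: divide_nonneg_pos mult_nonneg_nonneg)

context
  fixes hb c kB :: real
  assumes hb: "hb > 0" and cc: "c > 0" and kB: "kB > 0"
begin

lemma planck_pos_form: "T > 0 \<Longrightarrow> planck hb c kB \<nu> T = 2 * hb * \<nu> ^ 3 / (c ^ 2 * (exp (hb * \<nu> / (kB * T)) - 1))"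
  by (simp add: planck_def)

lemma planck_nonpos[simp]: "T \<le> 0 \<Longrightarrow> planck hb c kB \<nu> T = 0"
  by (simp add: planck_def)

lemma planck_nonneg': "\<nu> \<ge> 0 \<Longrightarrow> 0 \<le> planck hb c kB \<nu> T"
  using planck_nonneg hb kB by blast

lemma planck_pos: "\<nu> > 0 \<Longrightarrow> T > 0 \<Longrightarrow> 0 < planck hb c kB \<nu> T"
  unfolding planck_def using hb kB cc by (auto intro!: divide_pos_pos mult_pos_pos)

lemma planck_strict: assumes "\<nu> > 0" "T1 < T2" "T2 > 0"
  shows "planck hb c kB \<nu> T1 < planck hb c kB \<nu> T2"
proof (cases "T1 > 0")
  case False then show ?thesis using planck_pos[of \<nu> T2] assms by simp
next
  case True
  have "hb * \<nu> / (kB * T2) < hb * \<nu> / (kB * T1)"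
    using True assms hb kB by (intro divide_strict_left_mono) (auto intro!: mult_pos_pos)
  then have "exp (hb * \<nu> / (kB * T2)) - 1 < exp (hb * \<nu> / (kB * T1)) - 1" by simp
  moreover have "0 < exp (hb * \<nu> / (kB * T2)) - 1" using assms hb kB by simp
  ultimately have "c^2 * (exp (hb * \<nu> / (kB * T2)) - 1) < c^2 * (exp (hb * \<nu> / (kB * T1)) - 1)"
    "0 < c^2 * (exp (hb * \<nu> / (kB * T2)) - 1)" using cc by auto
  then show ?thesis using True assms hb
    by (simp add: planck_def divide_strict_left_mono)
qed

lemma planck_mono: "\<nu> > 0 \<Longrightarrow> T1 \<le> T2 \<Longrightarrow> planck hb c kB \<nu> T1 \<le> planck hb c kB \<nu> T2"
  using planck_strict[of \<nu> T1 T2]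
  by (cases "T1 = T2"; cases "T2 > 0") (auto simp: planck_nonneg')

lemma planck_cont: assumes "\<nu> > 0" shows "continuous_on {0..} (\<lambda>T. planck hb c kB \<nu> T)"
proof (clarsimp simp: continuous_on_eq_continuous_within)
  fix T :: real assume T: "0 \<le> T"
  show "continuous (at T within {0..}) (planck hb c kB \<nu>)"
  proof (cases "T = 0")
    case True
    have "((\<lambda>T. 2 * hb * \<nu> ^ 3 / (c ^ 2 * (exp ((hb * \<nu> / kB) / T) - 1))) \<longlongrightarrow> 0) (at_right 0)"
      by (rule planck0_lim) (use assms hb kB cc in auto)
    then have "(planck hb c kB \<nu> \<longlongrightarrow> 0) (at_right 0)"
      by (rule Lim_transform_eventually)
         (auto simp: eventually_at_right_less planck_def eventually_at_right_field intro!: exI[of _ 1])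
    then show ?thesis using True
      by (simp add: continuous_within at_within_Ici_at_right)
  next
    case False
    then have Tp: "T > 0" using T by simp
    have "isCont (\<lambda>T. 2 * hb * \<nu> ^ 3 / (c ^ 2 * (exp (hb * \<nu> / (kB * T)) - 1))) T"
      using Tp assms hb kB cc by (intro continuous_intros) auto
    then have "((\<lambda>T. 2 * hb * \<nu> ^ 3 / (c ^ 2 * (exp (hb * \<nu> / (kB * T)) - 1))) \<longlongrightarrow> planck hb c kB \<nu> T) (at T)"
      using Tp by (simp add: isCont_def planck_def)
    then have "(planck hb c kB \<nu> \<longlongrightarrow> planck hb c kB \<nu> T) (at T)"
    proof (rule Lim_transform_eventually)
      show "\<forall>\<^sub>F x in at T. 2 * hb * \<nu> ^ 3 / (c\<^sup>2 * (exp (hb * \<nu> / (kB * x)) - 1)) = planck hb c kB \<nu> x"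
        using eventually_at_ball[of T T UNIV] Tp
        by (intro eventually_mono[OF order_tendstoD(1)[OF tendsto_ident_at Tp]]) (simp add: planck_def)
    qed
    then show ?thesis unfolding continuous_within using tendsto_within_subset by blast
  qed
qed

lemma planck_tendsto:
  assumes "\<nu> > 0" "\<And>n. X n \<ge> 0" "X \<longlonglongrightarrow> T0"
  shows "(\<lambda>n. planck hb c kB \<nu> (X n)) \<longlonglongrightarrow> planck hb c kB \<nu> T0"
proof -
  have "T0 \<ge> 0" using assms(2,3) by (intro LIMSEQ_le_const) auto
  then show ?thesis
    by (intro continuous_on_tendsto_compose[OF planck_cont[OF assms(1)] assms(3)]) (use assms in auto)
qed

lemma planck_meas: "(\<lambda>x. planck hb c kB (fst x) (snd x)) \<in> borel_measurable (borel \<Otimes>\<^sub>M borel)"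
  unfolding planck_def by measurable

lemma planck_bounds:
  assumes "\<nu> > 0" "T > 0"
  shows "\<nu> \<le> 1 \<Longrightarrow> planck hb c kB \<nu> T \<le> 2 * kB * T / c^2"
    and "\<nu> \<ge> 1 \<Longrightarrow> planck hb c kB \<nu> T \<le> 2 * hb * 5^5 / (c^2 * (hb/(kB*T))^5) * (1 / \<nu>^2)"
proof -
  define b where "b = hb / (kB * T)"
  have b0: "b > 0" using hb kB assms by (simp add: b_def)
  have pf: "planck hb c kB \<nu> T = 2 * hb * \<nu> ^ 3 / (c ^ 2 * (exp (b * \<nu>) - 1))"
    using assms by (simp add: planck_def b_def)
  have bnu: "b * \<nu> > 0" using b0 assms by simp
  {
    assume "\<nu> \<le> 1"
    have "b * \<nu> \<le> exp (b * \<nu>) - 1" using exp_ge_add_one_self[of "b*\<nu>"] by linarith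
    then have "2 * hb * \<nu> ^ 3 / (c ^ 2 * (exp (b * \<nu>) - 1)) \<le> 2 * hb * \<nu> ^ 3 / (c ^ 2 * (b * \<nu>))"
      using bnu cc hb assms b0 by (intro divide_left_mono mult_left_mono mult_pos_pos) auto
    also have "\<dots> = 2 * hb * \<nu>^2 / (c^2 * b)" using assms by (simp add: power3_eq_cube power2_eq_square)
    also have "\<dots> \<le> 2 * hb * 1 / (c^2 * b)"
      using \<open>\<nu> \<le> 1\<close> assms hb cc b0 by (intro divide_right_mono mult_left_mono) (auto simp: power_le_one)
    also have "\<dots> = 2 * kB * T / c^2" using hb by (simp add: b_def)
    finally show "planck hb c kB \<nu> T \<le> 2 * kB * T / c^2" using pf by simp
  }
  {
    assume "\<nu> \<ge> 1"
    have "(b*\<nu>/5)^5 \<le> exp (b * \<nu>) - 1" using exp_ge_pow5[of "b*\<nu>"] bnu by simp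
    then have "2 * hb * \<nu> ^ 3 / (c ^ 2 * (exp (b * \<nu>) - 1)) \<le> 2 * hb * \<nu> ^ 3 / (c ^ 2 * (b*\<nu>/5)^5)"
      using bnu cc hb assms by (intro divide_left_mono mult_left_mono mult_pos_pos) auto
    also have "\<dots> = 2 * hb * 5^5 / (c^2 * b^5) * (1 / \<nu>^2)"
      using assms b0 cc by (simp add: field_simps power_mult_distrib numeral_eq_Suc)
    finally show "planck hb c kB \<nu> T \<le> 2 * hb * 5^5 / (c^2 * (hb/(kB*T))^5) * (1 / \<nu>^2)"
      using pf by (simp add: b_def)
  }
qed

lemma inv_sq_integrable: "integrable lborel (\<lambda>x::real. indicator {1..} x * (1 / x^2))"
proof -
  have "((\<lambda>x::real. 1 / x ^ 2) has_integral 1 / (real (2 - 1) * 1 ^ (2 - 1))) {1..}"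
    by (rule has_integral_inverse_power_to_inf) auto
  then have "(\<lambda>x::real. 1 / x ^ 2) integrable_on {1..}" by blast
  then have "(\<lambda>x::real. 1 / x ^ 2) absolutely_integrable_on {1..}"
    by (intro nonnegative_absolutely_integrable_1) auto
  then show ?thesis
    unfolding set_integrable_def by (subst (asm) integrable_completion) (auto simp: mult_ac)
qed

lemma planck_integrable:
  assumes "T \<ge> 0"
  shows "integrable lborel (\<lambda>\<nu>. planck hb c kB \<nu> T * indicator {0<..} \<nu>)"
proof (cases "T = 0")
  case True then show ?thesis by simp
next
  case False
  then have T: "T > 0" using assms by simp
  define K1 where "K1 = 2 * kB * T / c^2"
  define K2 where "K2 = 2 * hb * 5^5 / (c^2 * (hb/(kB*T))^5)"
  have i1: "integrable lborel (\<lambda>x::real. K1 * indicator {0..1} x)"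
    by (intro integrable_mult_right) (simp add: integrable_indicator_iff)
  have i2: "integrable lborel (\<lambda>x::real. K2 * (indicator {1..} x * (1 / x^2)))"
    by (intro integrable_mult_right inv_sq_integrable)
  show ?thesis
  proof (rule Bochner_Integration.integrable_bound[OF Bochner_Integration.integrable_add[OF i1 i2]])
    show "(\<lambda>\<nu>. planck hb c kB \<nu> T * indicator {0<..} \<nu>) \<in> borel_measurable lborel"
      using planck_meas by (simp add: planck_def) measurable
    show "AE x in lborel. norm (planck hb c kB x T * indicator {0<..} x)
            \<le> norm (K1 * indicator {0..1} x + K2 * (indicator {1..} x * (1 / x^2)))"
    proof (rule AE_I2)
      fix x :: real
      have K: "K1 \<ge> 0" "K2 \<ge> 0" using hb kB cc T by (auto simp: K1_def K2_def)
      show "norm (planck hb c kB x T * indicator {0<..} x)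
            \<le> norm (K1 * indicator {0..1} x + K2 * (indicator {1..} x * (1 / x^2)))"
      proof (cases "x > 0")
        case False then show ?thesis by simp
      next
        case xp: True
        have pn: "0 \<le> planck hb c kB x T" using xp planck_nonneg' by simp
        show ?thesis
        proof (cases "x \<le> 1")
          case True
          then show ?thesis using planck_bounds(1)[OF xp T] pn K xp
            by (auto simp: K1_def indicator_def)
        next
          case False
          have "planck hb c kB x T \<le> K2 * (1/x^2)" using planck_bounds(2)[OF xp T] False by (simp add: K2_def)
          moreover have "0 \<le> K2 * (1/x^2)" using K by simp
          ultimately show ?thesis using pn xp False K by (simp add: indicator_def)
        qed
      qed
    qed
  qed
qed

end

context fixes hb c kB :: real assumes hb: "hb > 0" and cc: "c > 0" and kB: "kB > 0" begin
lemma planck_ratio: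
  assumes "\<nu> > 0" "TM > 0" "Qc > 0"
  shows "Qc * planck hb c kB \<nu> TM \<le> planck hb c kB \<nu> (max 1 Qc * TM)"
proof -
  define s where "s = max 1 Qc"
  define y where "y = hb * \<nu> / (kB * (s * TM))"
  have s1: "s \<ge> 1" "Qc \<le> s" by (auto simp: s_def)
  have y0: "y > 0" using assms hb kB s1 by (auto simp: y_def)
  have e1: "hb * \<nu> / (kB * TM) = s * y" using s1 assms kB by (simp add: y_def)
  have d1: "0 < exp y - 1" using y0 by simp
  have "Qc * (exp y - 1) \<le> s * (exp y - 1)" using s1 d1 by (intro mult_right_mono) auto
  also have "\<dots> \<le> exp (s*y) - 1" by (rule exp_scale_ineq) (use s1 y0 in auto)
  finally have ineq: "Qc * (exp y - 1) \<le> exp (s*y) - 1" .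
  define A where "A = 2 * hb * \<nu> ^ 3"
  define D1 where "D1 = c^2 * (exp (s*y) - 1)"
  define D2 where "D2 = c^2 * (exp y - 1)"
  have A0: "A \<ge> 0" using hb assms by (simp add: A_def)
  have D2p: "D2 > 0" using d1 cc by (simp add: D2_def)
  have "Qc * D2 \<le> D1" using ineq cc unfolding D1_def D2_def
    by (metis mult.left_commute mult_left_mono zero_le_power2)
  then have D: "D2 \<le> D1 / Qc" using assms by (simp add: le_divide_eq mult.commute)
  have "Qc * (A / D1) = A / (D1 / Qc)" using assms by simp
  also have "\<dots> \<le> A / D2"
  proof -
    have "D1 / Qc > 0" using D D2p by linarith
    then show ?thesis by (rule divide_left_mono[OF D A0 mult_pos_pos[OF _ D2p]])
  qed
  finally have main: "Qc * (A / D1) \<le> A / D2" .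
  have p1: "planck hb c kB \<nu> TM = A / D1" using assms by (simp add: planck_def A_def D1_def e1)
  have p2: "planck hb c kB \<nu> (max 1 Qc * TM) = A / D2"
    using assms s1 by (simp add: planck_def A_def D2_def y_def s_def[symmetric])
  show ?thesis using main p1 p2 by simp
qed

end

locale rte =
  fixes hb c kB Z \<kappa>M TM Qc :: real
    and \<kappa> ai ar :: "real \<Rightarrow> real"
    and Qp Qm :: "real \<Rightarrow> real \<Rightarrow> real"
  assumes phys: "hb > 0" "c > 0" "kB > 0"
    and Z: "Z > 0"
    and meas_\<kappa>: "\<kappa> \<in> borel_measurable (restrict_space borel {0<..})"
    and meas_ai: "ai \<in> borel_measurable (restrict_space borel {0<..})"
    and meas_ar: "ar \<in> borel_measurable (restrict_space borel {0<..})"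
    and \<kappa>_bd: "\<And>\<nu>. \<nu> > 0 \<Longrightarrow> 0 < \<kappa> \<nu> \<and> \<kappa> \<nu> \<le> \<kappa>M"
    and a_bd: "\<And>\<nu>. \<nu> > 0 \<Longrightarrow> ai \<nu> \<ge> 0 \<and> ar \<nu> \<ge> 0 \<and> ai \<nu> + ar \<nu> < 1"
    and meas_Qp: "(\<lambda>(\<mu>, \<nu>). Qp \<nu> \<mu>) \<in> borel_measurable (restrict_space borel ({0<..<1} \<times> {0<..}))"
    and meas_Qm: "(\<lambda>(\<mu>, \<nu>). Qm \<nu> \<mu>) \<in> borel_measurable (restrict_space borel ({0<..<1} \<times> {0<..}))"
    and TM: "TM > 0" and Qc: "Qc > 0"
    and Q_bd: "\<And>\<mu> \<nu>. \<mu> \<in> {0<..<1} \<Longrightarrow> \<nu> > 0 \<Longrightarrow>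
        0 \<le> Qp \<nu> \<mu> \<and> Qp \<nu> \<mu> \<le> Qc * planck hb c kB \<nu> TM \<and>
        0 \<le> Qm \<nu> \<mu> \<and> Qm \<nu> \<mu> \<le> Qc * planck hb c kB \<nu> TM"
begin

abbreviation B where "B \<nu> T \<equiv> planck hb c kB \<nu> T"

definition Ts where "Ts = max 1 Qc * TM"
definition Bb where "Bb \<nu> = B \<nu> Ts"
definition w where "w \<nu> = (if \<nu> > 0 then \<kappa> \<nu> * (1 - (ai \<nu> + ar \<nu>)) else 0)"
definition \<kappa>' where "\<kappa>' \<nu> = (if \<nu> > 0 then \<kappa> \<nu> else 0)"
definition ai' where "ai' \<nu> = (if \<nu> > 0 then ai \<nu> else 0)"
definition ar' where "ar' \<nu> = (if \<nu> > 0 then ar \<nu> else 0)"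
definition Qp' where "Qp' \<nu> \<mu> = (if \<mu> \<in> {0<..<1} \<and> \<nu> > 0 then Qp \<nu> \<mu> else 0)"
definition Qm' where "Qm' \<nu> \<mu> = (if \<mu> \<in> {0<..<1} \<and> \<nu> > 0 then Qm \<nu> \<mu> else 0)"

lemma Ts_pos: "Ts > 0" using TM by (simp add: Ts_def)

lemma B_nonneg: "\<nu> \<ge> 0 \<Longrightarrow> 0 \<le> B \<nu> T" using planck_nonneg phys by blast
lemma Bb_nonneg: "\<nu> \<ge> 0 \<Longrightarrow> 0 \<le> Bb \<nu>" using B_nonneg by (simp add: Bb_def)
lemma B_mono: "\<nu> > 0 \<Longrightarrow> T1 \<le> T2 \<Longrightarrow> B \<nu> T1 \<le> B \<nu> T2" using planck_mono phys by blast
lemma B_strict: "\<nu> > 0 \<Longrightarrow> T1 < T2 \<Longrightarrow> T2 > 0 \<Longrightarrow> B \<nu> T1 < B \<nu> T2" using planck_strict phys by blast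
lemma B_meas[measurable]: "(\<lambda>x. B (fst x) (snd x)) \<in> borel_measurable (borel \<Otimes>\<^sub>M borel)"
  using planck_meas phys by blast
lemma B_meas1[measurable]: "(\<lambda>\<nu>. B \<nu> T) \<in> borel_measurable borel"
  unfolding planck_def by measurable
lemma B_integrable: "T \<ge> 0 \<Longrightarrow> integrable lborel (\<lambda>\<nu>. B \<nu> T * indicator {0<..} \<nu>)"
  using planck_integrable phys by blast
lemma B_meas_raw[measurable (raw)]:
  "u \<in> borel_measurable M \<Longrightarrow> v \<in> borel_measurable M \<Longrightarrow> (\<lambda>x. B (u x) (v x)) \<in> borel_measurable M"
  using measurable_compose[OF measurable_Pair B_meas] by (simp add: borel_prod)

lemma Q_le_Bb: "\<mu> \<in> {0<..<1} \<Longrightarrow> \<nu> > 0 \<Longrightarrow> Qp \<nu> \<mu> \<le> Bb \<nu> \<and> Qm \<nu> \<mu> \<le> Bb \<nu>"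
  using Q_bd[of \<mu> \<nu>] planck_ratio[of hb c kB \<nu> TM Qc] phys TM Qc by (auto simp: Bb_def Ts_def)

lemma meas_restr: "f \<in> borel_measurable (restrict_space borel {0<..}) \<Longrightarrow>
   (\<lambda>\<nu>::real. if \<nu> > 0 then f \<nu> else 0) \<in> borel_measurable borel"
  using measurable_restrict_space_iff[of "{0<..}" borel 0 borel f] by simp

lemma \<kappa>'_meas[measurable]: "\<kappa>' \<in> borel_measurable borel"
  unfolding \<kappa>'_def by (rule meas_restr[OF meas_\<kappa>])
lemma ai'_meas[measurable]: "ai' \<in> borel_measurable borel"
  unfolding ai'_def by (rule meas_restr[OF meas_ai])
lemma ar'_meas[measurable]: "ar' \<in> borel_measurable borel"
  unfolding ar'_def by (rule meas_restr[OF meas_ar])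
lemma w_alt: "w \<nu> = \<kappa>' \<nu> * (1 - (ai' \<nu> + ar' \<nu>))"
  by (simp add: w_def \<kappa>'_def ai'_def ar'_def)
lemma w_meas[measurable]: "w \<in> borel_measurable borel"
  unfolding w_alt[abs_def] by measurable
lemma w_bd: "0 \<le> w \<nu>" "w \<nu> \<le> \<kappa>M" "\<nu> > 0 \<Longrightarrow> w \<nu> > 0"
proof -
  show "0 \<le> w \<nu>" using \<kappa>_bd[of \<nu>] a_bd[of \<nu>] by (auto simp: w_def)
  show "w \<nu> \<le> \<kappa>M"
  proof (cases "\<nu> > 0")
    case True
    then have "\<kappa> \<nu> * (1 - (ai \<nu> + ar \<nu>)) \<le> \<kappa> \<nu>"
      using mult_left_mono[of "1 - (ai \<nu> + ar \<nu>)" 1 "\<kappa> \<nu>"] \<kappa>_bd[of \<nu>] a_bd[of \<nu>] by auto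
    moreover have "w \<nu> = \<kappa> \<nu> * (1 - (ai \<nu> + ar \<nu>))" using True by (simp add: w_def)
    ultimately show ?thesis using True \<kappa>_bd[of \<nu>] by linarith
  next
    case False
    have "0 < \<kappa>M" using \<kappa>_bd[of 1] by simp
    then show ?thesis using False by (simp add: w_def)
  qed
  show "\<nu> > 0 \<Longrightarrow> w \<nu> > 0" using \<kappa>_bd[of \<nu>] a_bd[of \<nu>] by (auto simp: w_def)
qed

lemma Qmeas_aux:
  fixes Q :: "real \<Rightarrow> real \<Rightarrow> real"
  assumes "(\<lambda>(\<mu>, \<nu>). Q \<nu> \<mu>) \<in> borel_measurable (restrict_space borel ({0<..<(1::real)} \<times> {(0::real)<..}))"
  shows "(\<lambda>x. if snd x \<in> {0<..<1} \<and> fst x > 0 then Q (fst x) (snd x) else 0) \<in> borel_measurable (borel \<Otimes>\<^sub>M borel)"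
proof -
  define S where "S = {0<..<(1::real)} \<times> {(0::real)<..}"
  define g where "g = (\<lambda>p. if p \<in> S then (case p of (\<mu>, \<nu>) \<Rightarrow> Q \<nu> \<mu>) else (0::real))"
  have "S \<in> sets borel" unfolding S_def by (intro borel_open open_Times) auto
  then have "g \<in> borel_measurable borel"
    using measurable_restrict_space_iff[of S borel 0 borel "\<lambda>(\<mu>, \<nu>). Q \<nu> \<mu>"] assms
    by (simp add: g_def S_def)
  then have g[measurable]: "g \<in> borel_measurable (borel \<Otimes>\<^sub>M borel)" by (simp add: borel_prod)
  have "(\<lambda>x. g (snd x, fst x)) \<in> borel_measurable (borel \<Otimes>\<^sub>M borel)" by measurable
  moreover have "(\<lambda>x. g (snd x, fst x)) = (\<lambda>x. if snd x \<in> {0<..<1} \<and> fst x > 0 then Q (fst x) (snd x) else 0)"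
    by (auto simp: g_def S_def)
  ultimately show ?thesis by simp
qed

lemma Qp'_meas[measurable]: "(\<lambda>x. Qp' (fst x) (snd x)) \<in> borel_measurable (borel \<Otimes>\<^sub>M borel)"
  using Qmeas_aux[OF meas_Qp] by (simp add: Qp'_def)
lemma Qm'_meas[measurable]: "(\<lambda>x. Qm' (fst x) (snd x)) \<in> borel_measurable (borel \<Otimes>\<^sub>M borel)"
  using Qmeas_aux[OF meas_Qm] by (simp add: Qm'_def)

lemma Qp'_meas_raw[measurable (raw)]:
  "u \<in> borel_measurable M \<Longrightarrow> v \<in> borel_measurable M \<Longrightarrow> (\<lambda>x. Qp' (u x) (v x)) \<in> borel_measurable M"
  using measurable_compose[OF measurable_Pair Qp'_meas] by simp
lemma Qm'_meas_raw[measurable (raw)]: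
  "u \<in> borel_measurable M \<Longrightarrow> v \<in> borel_measurable M \<Longrightarrow> (\<lambda>x. Qm' (u x) (v x)) \<in> borel_measurable M"
  using measurable_compose[OF measurable_Pair Qm'_meas] by simp

lemma nnint_w: "(\<integral>\<^sup>+ \<nu>. ennreal (\<kappa> \<nu> * (1 - (ai \<nu> + ar \<nu>)) * h \<nu>) * indicator {0<..} \<nu> \<partial>lborel)
   = (\<integral>\<^sup>+ \<nu>. ennreal (w \<nu> * h \<nu>) \<partial>lborel)"
  by (intro nn_integral_cong) (auto simp: w_def indicator_def)

lemma wB_nonneg: "0 \<le> w \<nu> * B \<nu> T"
proof (cases "\<nu> > 0")
  case True then show ?thesis by (intro mult_nonneg_nonneg w_bd(1) B_nonneg) auto
qed (simp add: w_def)

definition f where "f T = (LINT \<nu>|lborel. w \<nu> * B \<nu> T)"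

lemma wB_integrable: "T \<ge> 0 \<Longrightarrow> integrable lborel (\<lambda>\<nu>. w \<nu> * B \<nu> T)"
proof -
  assume T: "T \<ge> 0"
  have "integrable lborel (\<lambda>\<nu>. \<kappa>M * (B \<nu> T * indicator {0<..} \<nu>))"
    using B_integrable[OF T] by (intro integrable_mult_right)
  then show ?thesis
  proof (rule Bochner_Integration.integrable_bound)
    show "(\<lambda>\<nu>. w \<nu> * B \<nu> T) \<in> borel_measurable lborel" by measurable
    show "AE x in lborel. norm (w x * B x T) \<le> norm (\<kappa>M * (B x T * indicator {0<..} x))"
    proof (rule AE_I2)
      fix x :: real
      show "norm (w x * B x T) \<le> norm (\<kappa>M * (B x T * indicator {0<..} x))"
      proof (cases "x > 0")
        case True
        have "w x * B x T \<le> \<kappa>M * B x T" using w_bd[of x] B_nonneg[of x T] True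
          by (intro mult_right_mono) auto
        moreover have "0 \<le> w x * B x T" using w_bd[of x] B_nonneg[of x T] True by simp
        ultimately show ?thesis using True by simp
      qed (simp add: w_def)
    qed
  qed
qed

lemma F_eq: "T \<ge> 0 \<Longrightarrow> (\<integral>\<^sup>+ \<nu>. ennreal (w \<nu> * B \<nu> T) \<partial>lborel) = ennreal (f T)"
  unfolding f_def
  by (intro nn_integral_eq_integral wB_integrable AE_I2)
     (auto intro!: wB_nonneg)

lemma f_nonneg: "0 \<le> f T"
  unfolding f_def
  by (intro integral_nonneg_AE AE_I2) (auto intro!: wB_nonneg)

lemma f_0: "f 0 = 0" by (simp add: f_def planck_def)

end

lemma not_AE_nonpos: "\<not> (AE x in lborel. (x::real) \<le> 0)"
proof
  assume "AE x in lborel. (x::real) \<le> 0"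
  then have "emeasure lborel {x::real. \<not> x \<le> 0} = 0"
    by (subst (asm) AE_iff_measurable[of "{x::real. \<not> x \<le> 0}"]) auto
  moreover have "emeasure lborel {0<..<(1::real)} \<le> emeasure lborel {x::real. \<not> x \<le> 0}"
    by (intro emeasure_mono) auto
  ultimately show False by simp
qed

context rte begin

lemma f_strict: assumes "0 \<le> T1" "T1 < T2" shows "f T1 < f T2"
proof -
  have i1: "integrable lborel (\<lambda>\<nu>. w \<nu> * B \<nu> T1)" and i2: "integrable lborel (\<lambda>\<nu>. w \<nu> * B \<nu> T2)"
    using assms by (auto intro!: wB_integrable)
  define d where "d \<nu> = w \<nu> * B \<nu> T2 - w \<nu> * B \<nu> T1" for \<nu>
  have id: "integrable lborel d" unfolding d_def using i1 i2 by auto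
  have dnn: "0 \<le> d \<nu>" for \<nu>
  proof (cases "\<nu> > 0")
    case True
    have "w \<nu> * B \<nu> T1 \<le> w \<nu> * B \<nu> T2" using True assms w_bd(1)
      by (intro mult_left_mono B_mono) auto
    then show ?thesis by (simp add: d_def)
  qed (simp add: d_def w_def)
  have dpos: "\<nu> > 0 \<Longrightarrow> 0 < d \<nu>" for \<nu>
  proof -
    assume p: "\<nu> > 0"
    have "w \<nu> * B \<nu> T1 < w \<nu> * B \<nu> T2" using p assms w_bd(3)[OF p]
      by (intro mult_strict_left_mono B_strict) auto
    then show ?thesis by (simp add: d_def)
  qed
  have "f T2 - f T1 = integral\<^sup>L lborel d" unfolding f_def d_def
    by (rule Bochner_Integration.integral_diff[symmetric, OF i2 i1])
  moreover have "integral\<^sup>L lborel d \<noteq> 0"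
  proof
    assume "integral\<^sup>L lborel d = 0"
    then have "AE x in lborel. d x = 0" using integral_nonneg_eq_0_iff_AE[OF id AE_I2[OF dnn]] by blast
    then have "AE x in lborel. (x::real) \<le> 0" by eventually_elim (metis dpos less_irrefl not_le)
    then show False using not_AE_nonpos by simp
  qed
  moreover have "0 \<le> integral\<^sup>L lborel d" using dnn by (intro integral_nonneg_AE) auto
  ultimately show ?thesis by simp
qed

lemma f_mono: "0 \<le> T1 \<Longrightarrow> T1 \<le> T2 \<Longrightarrow> f T1 \<le> f T2"
  using f_strict[of T1 T2] by (cases "T1 = T2") auto

lemma f_cont: "continuous_on {0..} f"
proof (rule continuous_on_sequentiallyI)
  fix u :: "nat \<Rightarrow> real" and a assume u: "\<forall>n. u n \<in> {0..}" "a \<in> {0..}" "u \<longlonglongrightarrow> a"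
  have "Bseq u" using u(3) convergent_imp_Bseq convergent_def by blast
  then obtain K where K: "K > 0" "\<And>n. norm (u n) \<le> K" using BseqE by blast
  have uK: "u n \<le> K" for n using K(2)[of n] by simp
  show "(\<lambda>n. f (u n)) \<longlonglongrightarrow> f a"
    unfolding f_def
  proof (rule integral_dominated_convergence[where w="\<lambda>\<nu>. \<kappa>M * (B \<nu> K * indicator {0<..} \<nu>)"])
    show "(\<lambda>\<nu>. w \<nu> * B \<nu> a) \<in> borel_measurable lborel" by measurable
    show "(\<lambda>\<nu>. w \<nu> * B \<nu> (u n)) \<in> borel_measurable lborel" for n by measurable
    show "integrable lborel (\<lambda>\<nu>. \<kappa>M * (B \<nu> K * indicator {0<..} \<nu>))"
      using B_integrable[of K] K by (intro integrable_mult_right) auto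
    show "AE x in lborel. (\<lambda>n. w x * B x (u n)) \<longlonglongrightarrow> w x * B x a"
    proof (rule AE_I2)
      fix x :: real
      show "(\<lambda>n. w x * B x (u n)) \<longlonglongrightarrow> w x * B x a"
      proof (cases "x > 0")
        case True
        show ?thesis
          by (intro tendsto_mult tendsto_const planck_tendsto[OF phys True]) (use u in auto)
      qed (simp add: w_def)
    qed
    show "AE x in lborel. norm (w x * B x (u n)) \<le> \<kappa>M * (B x K * indicator {0<..} x)" for n
    proof (rule AE_I2)
      fix x :: real
      show "norm (w x * B x (u n)) \<le> \<kappa>M * (B x K * indicator {0<..} x)"
      proof (cases "x > 0")
        case True
        have "w x * B x (u n) \<le> \<kappa>M * B x K"
          using True w_bd[of x] B_nonneg[of x] uK[of n]
          by (intro mult_mono B_mono) auto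
        then show ?thesis using True wB_nonneg[of x "u n"] by simp
      qed (simp add: w_def)
    qed
  qed
qed

lemma Tof_alt: "Tof hb c kB \<kappa> (\<lambda>\<nu>. ai \<nu> + ar \<nu>) J \<tau> =
   (THE T. T \<ge> 0 \<and> (\<integral>\<^sup>+\<nu>. ennreal (w \<nu> * B \<nu> T) \<partial>lborel) = (\<integral>\<^sup>+\<nu>. ennreal (w \<nu> * J \<nu> \<tau>) \<partial>lborel))"
  unfolding Tof_def nnint_w[of "\<lambda>\<nu>. J \<nu> \<tau>"] 
  by (simp add: nnint_w[of "\<lambda>\<nu>. B \<nu> _"])

definition g :: "(real \<Rightarrow> real \<Rightarrow> real) \<Rightarrow> real \<Rightarrow> ennreal" where
  "g J \<tau> = (\<integral>\<^sup>+\<nu>. ennreal (w \<nu> * J \<nu> \<tau>) \<partial>lborel)"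

lemma Tof_char:
  assumes J: "\<And>\<nu>. \<nu> > 0 \<Longrightarrow> 0 \<le> J \<nu> \<tau> \<and> J \<nu> \<tau> \<le> Bb \<nu>"
  shows "Tof hb c kB \<kappa> (\<lambda>\<nu>. ai \<nu> + ar \<nu>) J \<tau> \<in> {0..Ts}"
    and "ennreal (f (Tof hb c kB \<kappa> (\<lambda>\<nu>. ai \<nu> + ar \<nu>) J \<tau>)) = g J \<tau>"
proof -
  have "g J \<tau> \<le> (\<integral>\<^sup>+\<nu>. ennreal (w \<nu> * B \<nu> Ts) \<partial>lborel)"
    unfolding g_def
  proof (intro nn_integral_mono)
    fix \<nu> :: real
    show "ennreal (w \<nu> * J \<nu> \<tau>) \<le> ennreal (w \<nu> * B \<nu> Ts)"
    proof (cases "\<nu> > 0")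
      case True
      then show ?thesis using J[OF True] w_bd(1)[of \<nu>]
        by (intro ennreal_leI mult_left_mono) (auto simp: Bb_def)
    qed (simp add: w_def)
  qed
  also have "\<dots> = ennreal (f Ts)" using Ts_pos by (intro F_eq) simp
  finally have gle: "g J \<tau> \<le> ennreal (f Ts)" .
  define r where "r = enn2real (g J \<tau>)"
  have lt: "g J \<tau> < top" using gle ennreal_less_top le_less_trans by blast
  have r: "g J \<tau> = ennreal r" "0 \<le> r" using lt by (auto simp: r_def ennreal_enn2real)
  have rle: "r \<le> f Ts" using gle r f_nonneg[of Ts] by (simp add: ennreal_le_iff)
  have cont: "continuous_on {0..Ts} f" by (rule continuous_on_subset[OF f_cont]) auto
  have "\<exists>x\<ge>0. x \<le> Ts \<and> f x = r" using IVT'[of f 0 r Ts, OF _ rle _ cont] f_0 r(2) Ts_pos by simp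
  then obtain T0 where T0: "0 \<le> T0" "T0 \<le> Ts" "f T0 = r" by blast
  have P: "T0 \<ge> 0 \<and> (\<integral>\<^sup>+\<nu>. ennreal (w \<nu> * B \<nu> T0) \<partial>lborel) = (\<integral>\<^sup>+\<nu>. ennreal (w \<nu> * J \<nu> \<tau>) \<partial>lborel)"
    using T0 r F_eq[of T0] by (simp add: g_def)
  have U: "T = T0" if "T \<ge> 0 \<and> (\<integral>\<^sup>+\<nu>. ennreal (w \<nu> * B \<nu> T) \<partial>lborel) = (\<integral>\<^sup>+\<nu>. ennreal (w \<nu> * J \<nu> \<tau>) \<partial>lborel)" for T
  proof -
    have "ennreal (f T) = ennreal (f T0)" using that P F_eq[of T] F_eq[of T0] T0 by simp
    then have "f T = f T0" using f_nonneg by simp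
    then show ?thesis using f_strict[of T T0] f_strict[of T0 T] that T0
      by (cases T T0 rule: linorder_cases) auto
  qed
  have eq: "Tof hb c kB \<kappa> (\<lambda>\<nu>. ai \<nu> + ar \<nu>) J \<tau> = T0"
    unfolding Tof_alt by (rule the_equality, rule P, erule U)
  show "Tof hb c kB \<kappa> (\<lambda>\<nu>. ai \<nu> + ar \<nu>) J \<tau> \<in> {0..Ts}" using eq T0 by simp
  show "ennreal (f (Tof hb c kB \<kappa> (\<lambda>\<nu>. ai \<nu> + ar \<nu>) J \<tau>)) = g J \<tau>" using eq T0 r by simp
qed

lemma Tof_level:
  assumes J: "\<And>\<nu>. \<nu> > 0 \<Longrightarrow> 0 \<le> J \<nu> \<tau> \<and> J \<nu> \<tau> \<le> Bb \<nu>" and s: "s \<ge> 0"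
  shows "Tof hb c kB \<kappa> (\<lambda>\<nu>. ai \<nu> + ar \<nu>) J \<tau> \<le> s \<longleftrightarrow> g J \<tau> \<le> ennreal (f s)"
proof -
  define T where "T = Tof hb c kB \<kappa> (\<lambda>\<nu>. ai \<nu> + ar \<nu>) J \<tau>"
  have T: "T \<in> {0..Ts}" "ennreal (f T) = g J \<tau>" using Tof_char[where J=J and \<tau>=\<tau>, OF J] by (auto simp: T_def)
  show ?thesis unfolding T_def[symmetric]
  proof
    assume "T \<le> s"
    then have "f T \<le> f s" using T f_mono[of T s] by auto
    then show "g J \<tau> \<le> ennreal (f s)" using T(2) by (metis ennreal_leI)
  next
    assume h: "g J \<tau> \<le> ennreal (f s)"
    show "T \<le> s"
    proof (rule ccontr)
      assume "\<not> T \<le> s"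
      then have "f s < f T" using f_strict[of s T] s by simp
      then have "ennreal (f s) < ennreal (f T)" using f_nonneg by (simp add: ennreal_less_iff)
      then show False using h T by simp
    qed
  qed
qed

lemma Tof_mono:
  assumes J1: "\<And>\<nu>. \<nu> > 0 \<Longrightarrow> 0 \<le> J1 \<nu> \<tau> \<and> J1 \<nu> \<tau> \<le> Bb \<nu>"
    and J2: "\<And>\<nu>. \<nu> > 0 \<Longrightarrow> 0 \<le> J2 \<nu> \<tau> \<and> J2 \<nu> \<tau> \<le> Bb \<nu>"
    and le: "\<And>\<nu>. \<nu> > 0 \<Longrightarrow> J1 \<nu> \<tau> \<le> J2 \<nu> \<tau>"
  shows "Tof hb c kB \<kappa> (\<lambda>\<nu>. ai \<nu> + ar \<nu>) J1 \<tau> \<le> Tof hb c kB \<kappa> (\<lambda>\<nu>. ai \<nu> + ar \<nu>) J2 \<tau>"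
proof -
  have "g J1 \<tau> \<le> g J2 \<tau>" unfolding g_def
  proof (intro nn_integral_mono)
    fix \<nu> :: real
    show "ennreal (w \<nu> * J1 \<nu> \<tau>) \<le> ennreal (w \<nu> * J2 \<nu> \<tau>)"
    proof (cases "\<nu> > 0")
      case True
      then show ?thesis using le[OF True] w_bd(1)[of \<nu>] by (intro ennreal_leI mult_left_mono) auto
    qed (simp add: w_def)
  qed
  also have "\<dots> = ennreal (f (Tof hb c kB \<kappa> (\<lambda>\<nu>. ai \<nu> + ar \<nu>) J2 \<tau>))" using Tof_char(2)[where J=J2 and \<tau>=\<tau>, OF J2] by simp
  finally have gg: "g J1 \<tau> \<le> ennreal (f (Tof hb c kB \<kappa> (\<lambda>\<nu>. ai \<nu> + ar \<nu>) J2 \<tau>))" .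
  have t2: "Tof hb c kB \<kappa> (\<lambda>\<nu>. ai \<nu> + ar \<nu>) J2 \<tau> \<ge> 0"
    using Tof_char(1)[where J=J2 and \<tau>=\<tau>, OF J2] by simp
  show ?thesis by (rule iffD2[OF Tof_level[where J=J1 and \<tau>=\<tau>, OF J1 t2] gg])
qed

end

lemma borel_measurable_LINT_lborel[measurable (raw)]:
  fixes f :: "'a \<Rightarrow> real \<Rightarrow> real"
  assumes "case_prod f \<in> borel_measurable (N \<Otimes>\<^sub>M borel)"
  shows "(\<lambda>x. integral\<^sup>L lborel (f x)) \<in> borel_measurable N"
proof -
  have "case_prod f \<in> borel_measurable (N \<Otimes>\<^sub>M lborel)"
    using assms by (subst measurable_cong_sets[OF sets_pair_measure_cong[OF refl sets_lborel] refl])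
  then show ?thesis by (rule lborel.borel_measurable_lebesgue_integral)
qed

lemma sbm_mult:
  fixes K s :: "real \<Rightarrow> real"
  assumes K: "continuous_on UNIV K" and s: "set_borel_measurable lborel A s"
  shows "set_borel_measurable lborel A (\<lambda>t. K t * s t)"
proof -
  have Km: "K \<in> borel_measurable borel" using K by (rule borel_measurable_continuous_onI)
  have sm: "(\<lambda>t. indicator A t *\<^sub>R s t) \<in> borel_measurable borel"
    using s unfolding set_borel_measurable_def by simp
  have "(\<lambda>t. K t * (indicator A t *\<^sub>R s t)) \<in> borel_measurable borel"
    using Km sm by (rule borel_measurable_times)
  moreover have "(\<lambda>t. K t * (indicator A t *\<^sub>R s t)) = (\<lambda>t. indicator A t *\<^sub>R (K t * s t))"
    by (auto simp: fun_eq_iff indicator_def)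
  ultimately show ?thesis unfolding set_borel_measurable_def by simp
qed

lemma kint_integrable:
  fixes K s :: "real \<Rightarrow> real"
  assumes K: "continuous_on UNIV K" and s: "set_borel_measurable lborel {a..b} s"
    and C: "\<And>t. t \<in> {a..b} \<Longrightarrow> \<bar>s t\<bar> \<le> C"
  shows "set_integrable lborel {a..b} (\<lambda>t. K t * s t)"
proof (rule set_integrable_bound[where f="\<lambda>t. \<bar>K t\<bar> * C"])
  show "set_integrable lborel {a..b} (\<lambda>t. \<bar>K t\<bar> * C)"
    by (intro borel_integrable_atLeastAtMost' continuous_intros continuous_on_subset[OF K]) auto
  show "set_borel_measurable lborel {a..b} (\<lambda>t. K t * s t)" by (rule sbm_mult[OF K s])
  show "AE x in lborel. x \<in> {a..b} \<longrightarrow> norm (K x * s x) \<le> norm (\<bar>K x\<bar> * C)"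
  proof (rule AE_I2, rule impI)
    fix x assume x: "x \<in> {a..b}"
    have "\<bar>K x\<bar> * \<bar>s x\<bar> \<le> \<bar>K x\<bar> * C" using C[OF x] by (intro mult_left_mono) auto
    moreover have "0 \<le> C" using C[OF x] by linarith
    ultimately show "norm (K x * s x) \<le> norm (\<bar>K x\<bar> * C)" by (simp add: abs_mult)
  qed
qed

lemma kint_mono:
  fixes K s1 s2 :: "real \<Rightarrow> real"
  assumes K: "continuous_on UNIV K" "\<And>t. t \<in> {a..b} \<Longrightarrow> 0 \<le> K t"
    and s1: "set_borel_measurable lborel {a..b} s1" "\<And>t. t \<in> {a..b} \<Longrightarrow> \<bar>s1 t\<bar> \<le> C"
    and s2: "set_borel_measurable lborel {a..b} s2" "\<And>t. t \<in> {a..b} \<Longrightarrow> \<bar>s2 t\<bar> \<le> C"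
    and le: "\<And>t. t \<in> {a..b} \<Longrightarrow> s1 t \<le> s2 t"
  shows "(LINT t:{a..b}|lborel. K t * s1 t) \<le> (LINT t:{a..b}|lborel. K t * s2 t)"
  by (intro set_integral_mono kint_integrable[OF K(1) s1] kint_integrable[OF K(1) s2] mult_left_mono le K(2))

lemma kint_bounds:
  fixes K s :: "real \<Rightarrow> real"
  assumes K: "continuous_on UNIV K" "\<And>t. t \<in> {a..b} \<Longrightarrow> 0 \<le> K t"
    and s: "set_borel_measurable lborel {a..b} s" "\<And>t. t \<in> {a..b} \<Longrightarrow> 0 \<le> s t \<and> s t \<le> C"
  shows "0 \<le> (LINT t:{a..b}|lborel. K t * s t)"
    and "(LINT t:{a..b}|lborel. K t * s t) \<le> C * (LINT t:{a..b}|lborel. K t)"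
proof -
  have C: "\<And>t. t \<in> {a..b} \<Longrightarrow> \<bar>s t\<bar> \<le> C"
  proof -
    fix t assume "t \<in> {a..b}" then show "\<bar>s t\<bar> \<le> C" using s(2)[of t] by simp
  qed
  have z: "set_borel_measurable lborel {a..b} (\<lambda>t. 0::real)" by (simp add: set_borel_measurable_def)
  have c: "set_borel_measurable lborel {a..b} (\<lambda>t. C::real)" by (simp add: set_borel_measurable_def)
  have "(LINT t:{a..b}|lborel. K t * 0) \<le> (LINT t:{a..b}|lborel. K t * s t)"
  proof (rule kint_mono[OF K z _ s(1) C])
    fix t assume t: "t \<in> {a..b}"
    show "\<bar>0\<bar> \<le> C" using C[OF t] by simp
    show "0 \<le> s t" using s(2)[OF t] by simp
  qed
  then show "0 \<le> (LINT t:{a..b}|lborel. K t * s t)" by simp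
  have "(LINT t:{a..b}|lborel. K t * s t) \<le> (LINT t:{a..b}|lborel. K t * C)"
  proof (rule kint_mono[OF K s(1) C c])
    fix t assume t: "t \<in> {a..b}"
    show "\<bar>C\<bar> \<le> C" using C[OF t] by simp
    show "s t \<le> C" using s(2)[OF t] by simp
  qed
  then show "(LINT t:{a..b}|lborel. K t * s t) \<le> C * (LINT t:{a..b}|lborel. K t)"
    by (simp add: mult.commute)
qed

lemma kint_lim:
  fixes K s0 :: "real \<Rightarrow> real" and s :: "nat \<Rightarrow> real \<Rightarrow> real"
  assumes K: "continuous_on UNIV K"
    and sm: "\<And>n. set_borel_measurable lborel {a..b} (s n)" and s0m: "set_borel_measurable lborel {a..b} s0"
    and C: "\<And>n t. t \<in> {a..b} \<Longrightarrow> \<bar>s n t\<bar> \<le> C"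
    and lim: "\<And>t. t \<in> {a..b} \<Longrightarrow> (\<lambda>n. s n t) \<longlonglongrightarrow> s0 t"
  shows "(\<lambda>n. LINT t:{a..b}|lborel. K t * s n t) \<longlonglongrightarrow> (LINT t:{a..b}|lborel. K t * s0 t)"
  unfolding set_lebesgue_integral_def
proof (rule integral_dominated_convergence[where w="\<lambda>t. indicator {a..b} t *\<^sub>R (\<bar>K t\<bar> * C)"])
  show "(\<lambda>t. indicator {a..b} t *\<^sub>R (K t * s0 t)) \<in> borel_measurable lborel"
    using sbm_mult[OF K s0m] unfolding set_borel_measurable_def by simp
  show "(\<lambda>t. indicator {a..b} t *\<^sub>R (K t * s n t)) \<in> borel_measurable lborel" for n
    using sbm_mult[OF K sm] unfolding set_borel_measurable_def by simp
  show "integrable lborel (\<lambda>t. indicator {a..b} t *\<^sub>R (\<bar>K t\<bar> * C))"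
    using borel_integrable_atLeastAtMost'[of a b "\<lambda>t. \<bar>K t\<bar> * C"]
    unfolding set_integrable_def
    by (simp add: continuous_intros continuous_on_subset[OF K])
  show "AE x in lborel. (\<lambda>n. indicator {a..b} x *\<^sub>R (K x * s n x)) \<longlonglongrightarrow> indicator {a..b} x *\<^sub>R (K x * s0 x)"
  proof (rule AE_I2)
    fix x :: real
    show "(\<lambda>n. indicator {a..b} x *\<^sub>R (K x * s n x)) \<longlonglongrightarrow> indicator {a..b} x *\<^sub>R (K x * s0 x)"
      by (cases "x \<in> {a..b}") (auto intro!: tendsto_mult tendsto_const lim)
  qed
  show "AE x in lborel. norm (indicator {a..b} x *\<^sub>R (K x * s n x)) \<le> indicator {a..b} x *\<^sub>R (\<bar>K x\<bar> * C)" for n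
  proof (rule AE_I2)
    fix x :: real
    show "norm (indicator {a..b} x *\<^sub>R (K x * s n x)) \<le> indicator {a..b} x *\<^sub>R (\<bar>K x\<bar> * C)"
    proof (cases "x \<in> {a..b}")
      case True
      then show ?thesis using C[OF True, of n] by (simp add: abs_mult mult_left_mono)
    qed simp
  qed
qed

lemma kern_int_pos:
  fixes k m \<tau> :: real assumes "k > 0" "m > 0" "\<tau> \<ge> 0"
  shows "(LINT t:{0..\<tau>}|lborel. exp (- k * (\<tau> - t) / m) * (1 / m)) = (1 - exp (- k * \<tau> / m)) / k"
proof -
  have "(LINT t:{0..\<tau>}|lborel. exp (- k * (\<tau> - t) / m) * (1 / m))
      = (\<lambda>t. exp (- k * (\<tau> - t) / m) / k) \<tau> - (\<lambda>t. exp (- k * (\<tau> - t) / m) / k) 0"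
    unfolding set_lebesgue_integral_def
  proof (rule integral_FTC_atLeastAtMost[OF assms(3)])
    fix x assume "0 \<le> x" "x \<le> \<tau>"
    have "((\<lambda>t. exp (- k * (\<tau> - t) / m) / k) has_real_derivative exp (- k * (\<tau> - x) / m) * (1 / m)) (at x)"
      using assms by (auto intro!: derivative_eq_intros)
    then show "((\<lambda>t. exp (- k * (\<tau> - t) / m) / k) has_vector_derivative exp (- k * (\<tau> - x) / m) * (1 / m)) (at x within {0..\<tau>})"
      by (simp add: has_real_derivative_iff_has_vector_derivative has_vector_derivative_at_within)
  next
    show "continuous_on {0..\<tau>} (\<lambda>t. exp (- k * (\<tau> - t) / m) * (1 / m))" using assms by (intro continuous_intros) auto
  qed
  also have "\<dots> = (1 - exp (- k * \<tau> / m)) / k" by (simp add: diff_divide_distrib)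
  finally show ?thesis .
qed

lemma kern_int_neg:
  fixes k m \<tau> Z :: real assumes "k > 0" "m > 0" "\<tau> \<le> Z"
  shows "(LINT t:{\<tau>..Z}|lborel. exp (- k * (t - \<tau>) / m) * (1 / m)) = (1 - exp (- k * (Z - \<tau>) / m)) / k"
proof -
  have "(LINT t:{\<tau>..Z}|lborel. exp (- k * (t - \<tau>) / m) * (1 / m))
      = (\<lambda>t. - exp (- k * (t - \<tau>) / m) / k) Z - (\<lambda>t. - exp (- k * (t - \<tau>) / m) / k) \<tau>"
    unfolding set_lebesgue_integral_def
  proof (rule integral_FTC_atLeastAtMost[OF assms(3)])
    fix x assume "\<tau> \<le> x" "x \<le> Z"
    have "((\<lambda>t. - exp (- k * (t - \<tau>) / m) / k) has_real_derivative exp (- k * (x - \<tau>) / m) * (1 / m)) (at x)"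
      using assms by (auto intro!: derivative_eq_intros)
    then show "((\<lambda>t. - exp (- k * (t - \<tau>) / m) / k) has_vector_derivative exp (- k * (x - \<tau>) / m) * (1 / m)) (at x within {\<tau>..Z})"
      by (simp add: has_real_derivative_iff_has_vector_derivative has_vector_derivative_at_within)
  next
    show "continuous_on {\<tau>..Z} (\<lambda>t. exp (- k * (t - \<tau>) / m) * (1 / m))" using assms by (intro continuous_intros) auto
  qed
  also have "\<dots> = (1 - exp (- k * (Z - \<tau>) / m)) / k" by (simp add: diff_divide_distrib)
  finally show ?thesis .
qed

lemma LINT_Icc_cong_open:
  fixes f g :: "real \<Rightarrow> real"
  assumes "\<And>x. a < x \<Longrightarrow> x < b \<Longrightarrow> f x = g x"
  shows "(LINT x:{a..b}|lborel. f x) = (LINT x:{a..b}|lborel. g x)"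
  unfolding set_lebesgue_integral_def
  by (rule integral_discrete_difference[where X="{a,b}"]) (auto simp: assms indicator_def)

lemma LINT_one: "(LINT x:{-1..(1::real)}|lborel. (1::real)) = 2"
  unfolding set_lebesgue_integral_def by (simp add: integral_indicator content_real)

lemma LINT_sq: "(LINT x:{-1..1}|lborel. (x::real)^2) = 2/3"
proof -
  have "(LINT x:{-1..1}|lborel. (x::real)^2) = (\<lambda>x. x^3/3) 1 - (\<lambda>x. x^3/3) (-1::real)"
    unfolding set_lebesgue_integral_def
  proof (rule integral_FTC_atLeastAtMost)
    fix x :: real
    have "((\<lambda>x::real. x^3/3) has_real_derivative x^2) (at x)"
      by (auto intro!: derivative_eq_intros simp: power2_eq_square)
    then show "((\<lambda>x::real. x^3/3) has_vector_derivative x^2) (at x within {-1..1})"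
      by (simp add: has_real_derivative_iff_has_vector_derivative has_vector_derivative_at_within)
  qed (auto intro!: continuous_intros)
  then show ?thesis by simp
qed

lemma scat_kernel_nonneg:
  fixes \<mu> x :: real assumes "\<bar>\<mu>\<bar> \<le> 1" "\<bar>x\<bar> \<le> 1"
  shows "0 \<le> (3 - \<mu>^2) + (3 * \<mu>^2 - 1) * x^2"
proof -
  have a: "\<mu>^2 \<le> 1" "x^2 \<le> 1" using assms by (auto simp: abs_square_le_1)
  have b: "0 \<le> \<mu>^2 * x^2" by simp
  have "(3 - \<mu>^2) + (3 * \<mu>^2 - 1) * x^2 = 3 - \<mu>^2 - x^2 + 3 * (\<mu>^2 * x^2)" by (simp add: algebra_simps)
  then show ?thesis using a b by linarith
qed

lemma scat_kernel_int:
  "(LINT x:{-1..1}|lborel. (3 - \<mu>^2) + (3 * \<mu>^2 - 1) * (x::real)^2) = 16/3"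
proof -
  define F where "F x = (3 - \<mu>^2) * x + (3 * \<mu>^2 - 1) * x^3 / 3" for x :: real
  have "(LINT x:{-1..1}|lborel. (3 - \<mu>^2) + (3 * \<mu>^2 - 1) * (x::real)^2) = F 1 - F (-1)"
    unfolding set_lebesgue_integral_def
  proof (rule integral_FTC_atLeastAtMost[where F=F])
    fix x :: real
    have "(F has_real_derivative (3 - \<mu>^2) + (3 * \<mu>^2 - 1) * x^2) (at x)"
      unfolding F_def by (auto intro!: derivative_eq_intros simp: power2_eq_square)
    then show "(F has_vector_derivative (3 - \<mu>^2) + (3 * \<mu>^2 - 1) * x^2) (at x within {-1..1})"
      by (simp add: has_real_derivative_iff_has_vector_derivative has_vector_derivative_at_within)
  qed (auto intro!: continuous_intros)
  also have "\<dots> = 16/3" unfolding F_def by (simp add: field_simps power3_eq_cube)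
  finally show ?thesis .
qed

lemma scat_lin:
  fixes s :: "real \<Rightarrow> real"
  assumes "set_integrable lborel A s" "set_integrable lborel A (\<lambda>x. x^2 * s x)"
  shows "(3 - \<mu>^2) * (1/2 * (LINT x:A|lborel. s x)) + (3 * \<mu>^2 - 1) * (1/2 * (LINT x:A|lborel. x^2 * s x))
       = 1/2 * (LINT x:A|lborel. ((3 - \<mu>^2) + (3 * \<mu>^2 - 1) * x^2) * s x)"
proof -
  have i1: "set_integrable lborel A (\<lambda>x. (3 - \<mu>^2) * s x)" using assms(1) by auto
  have i2: "set_integrable lborel A (\<lambda>x. (3 * \<mu>^2 - 1) * (x^2 * s x))" using assms(2) by auto
  have eqf: "(\<lambda>x. ((3 - \<mu>^2) + (3 * \<mu>^2 - 1) * x^2) * s x) = (\<lambda>x. (3 - \<mu>^2) * s x + (3 * \<mu>^2 - 1) * (x^2 * s x))"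
    by (rule ext) (simp add: algebra_simps)
  define L1 where "L1 = (LINT x:A|lborel. s x)"
  define L2 where "L2 = (LINT x:A|lborel. x^2 * s x)"
  have "(LINT x:A|lborel. ((3 - \<mu>^2) + (3 * \<mu>^2 - 1) * x^2) * s x)
       = (LINT x:A|lborel. (3 - \<mu>^2) * s x + (3 * \<mu>^2 - 1) * (x^2 * s x))"
    by (simp only: eqf)
  also have "\<dots> = (LINT x:A|lborel. (3 - \<mu>^2) * s x) + (LINT x:A|lborel. (3 * \<mu>^2 - 1) * (x^2 * s x))"
    by (rule set_integral_add(2)[OF i1 i2])
  also have "\<dots> = (3 - \<mu>^2) * L1 + (3 * \<mu>^2 - 1) * L2"
    unfolding L1_def L2_def by (simp only: set_integral_mult_right)
  finally have *: "(LINT x:A|lborel. ((3 - \<mu>^2) + (3 * \<mu>^2 - 1) * x^2) * s x) = (3 - \<mu>^2) * L1 + (3 * \<mu>^2 - 1) * L2" .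
  show ?thesis unfolding * L1_def[symmetric] L2_def[symmetric] by (simp add: algebra_simps)
qed

context rte begin

definition Rg :: "real \<Rightarrow> real \<Rightarrow> real \<Rightarrow> bool" where
  "Rg \<nu> \<tau> \<mu> \<longleftrightarrow> \<nu> > 0 \<and> \<tau> \<in> {0..Z} \<and> \<mu> \<in> {-1<..<1}"

definition good :: "(real \<Rightarrow> real \<Rightarrow> real \<Rightarrow> real) \<Rightarrow> (real \<times> real \<times> real \<Rightarrow> real) \<Rightarrow> bool" where
  "good I E \<longleftrightarrow> E \<in> borel_measurable (borel \<Otimes>\<^sub>M (borel \<Otimes>\<^sub>M borel)) \<and>
     (\<forall>\<nu> \<tau> \<mu>. Rg \<nu> \<tau> \<mu> \<longrightarrow> I \<nu> \<tau> \<mu> = E (\<nu>, \<tau>, \<mu>) \<and> 0 \<le> I \<nu> \<tau> \<mu> \<and> I \<nu> \<tau> \<mu> \<le> Bb \<nu>)"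

definition Tg :: "(real \<Rightarrow> real) \<Rightarrow> real \<Rightarrow> real" where
  "Tg T t = (if t \<in> {0..Z} then T t else 0)"

definition goodT :: "(real \<Rightarrow> real) \<Rightarrow> bool" where
  "goodT T \<longleftrightarrow> Tg T \<in> borel_measurable borel \<and> (\<forall>t\<in>{0..Z}. 0 \<le> T t \<and> T t \<le> Ts)"

definition Ec :: "(real \<times> real \<times> real \<Rightarrow> real) \<Rightarrow> real \<times> real \<times> real \<Rightarrow> real" where
  "Ec E x = (if snd (snd x) \<in> {-1<..<1} then E x else 0)"

lemma Ec_meas[measurable]: assumes [measurable]: "E \<in> borel_measurable (borel \<Otimes>\<^sub>M (borel \<Otimes>\<^sub>M borel))"
  shows "Ec E \<in> borel_measurable (borel \<Otimes>\<^sub>M (borel \<Otimes>\<^sub>M borel))"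
  unfolding Ec_def greaterThanLessThan_iff by measurable

lemma good_Ec:
  assumes "good I E" "\<nu> > 0" "t \<in> {0..Z}"
  shows "\<And>x. x \<in> {-1<..<1} \<Longrightarrow> I \<nu> t x = Ec E (\<nu>, t, x)"
    and "\<And>x. 0 \<le> Ec E (\<nu>, t, x) \<and> Ec E (\<nu>, t, x) \<le> Bb \<nu>"
    and "set_borel_measurable lborel {-1..1} (\<lambda>x. Ec E (\<nu>, t, x))"
proof -
  show "\<And>x. x \<in> {-1<..<1} \<Longrightarrow> I \<nu> t x = Ec E (\<nu>, t, x)"
    using assms by (auto simp: good_def Rg_def Ec_def)
  show "0 \<le> Ec E (\<nu>, t, x) \<and> Ec E (\<nu>, t, x) \<le> Bb \<nu>" for x
  proof (cases "x \<in> {-1<..<1}")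
    case True
    then have "Rg \<nu> t x" using assms by (simp add: Rg_def)
    then have "I \<nu> t x = E (\<nu>, t, x) \<and> 0 \<le> I \<nu> t x \<and> I \<nu> t x \<le> Bb \<nu>"
      using assms(1) unfolding good_def by blast
    then show ?thesis using True by (simp add: Ec_def)
  qed (use Bb_nonneg[of \<nu>] assms in \<open>auto simp: Ec_def\<close>)
  have [measurable]: "E \<in> borel_measurable (borel \<Otimes>\<^sub>M (borel \<Otimes>\<^sub>M borel))" using assms by (simp add: good_def)
  have m: "(\<lambda>x. Ec E (\<nu>, t, x)) \<in> borel_measurable borel" by measurable
  show "set_borel_measurable lborel {-1..1} (\<lambda>x. Ec E (\<nu>, t, x))"
    unfolding set_borel_measurable_def using m by (intro borel_measurable_scaleR borel_measurable_indicator) auto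
qed

definition JE :: "(real \<times> real \<times> real \<Rightarrow> real) \<Rightarrow> real \<Rightarrow> real \<Rightarrow> real" where
  "JE E \<nu> t = 1/2 * (LINT x:{-1..1}|lborel. Ec E (\<nu>, t, x))"
definition KE :: "(real \<times> real \<times> real \<Rightarrow> real) \<Rightarrow> real \<Rightarrow> real \<Rightarrow> real" where
  "KE E \<nu> t = 1/2 * (LINT x:{-1..1}|lborel. x^2 * Ec E (\<nu>, t, x))"

lemma JE_meas[measurable]: assumes [measurable]: "E \<in> borel_measurable (borel \<Otimes>\<^sub>M (borel \<Otimes>\<^sub>M borel))"
  shows "(\<lambda>x. JE E (fst x) (snd x)) \<in> borel_measurable (borel \<Otimes>\<^sub>M borel)"
  unfolding JE_def set_lebesgue_integral_def indicator_def atLeastAtMost_iff by measurable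
lemma KE_meas[measurable]: assumes [measurable]: "E \<in> borel_measurable (borel \<Otimes>\<^sub>M (borel \<Otimes>\<^sub>M borel))"
  shows "(\<lambda>x. KE E (fst x) (snd x)) \<in> borel_measurable (borel \<Otimes>\<^sub>M borel)"
  unfolding KE_def set_lebesgue_integral_def indicator_def atLeastAtMost_iff by measurable

lemma JE_meas_raw[measurable (raw)]:
  "E \<in> borel_measurable (borel \<Otimes>\<^sub>M (borel \<Otimes>\<^sub>M borel)) \<Longrightarrow> u \<in> borel_measurable M \<Longrightarrow> v \<in> borel_measurable M \<Longrightarrow>
   (\<lambda>x. JE E (u x) (v x)) \<in> borel_measurable M"
  using measurable_compose[OF measurable_Pair JE_meas] by simp
lemma KE_meas_raw[measurable (raw)]:
  "E \<in> borel_measurable (borel \<Otimes>\<^sub>M (borel \<Otimes>\<^sub>M borel)) \<Longrightarrow> u \<in> borel_measurable M \<Longrightarrow> v \<in> borel_measurable M \<Longrightarrow>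
   (\<lambda>x. KE E (u x) (v x)) \<in> borel_measurable M"
  using measurable_compose[OF measurable_Pair KE_meas] by simp

lemma Jmom_JE: "good I E \<Longrightarrow> \<nu> > 0 \<Longrightarrow> t \<in> {0..Z} \<Longrightarrow> Jmom (I \<nu>) t = JE E \<nu> t"
  unfolding Jmom_def JE_def using good_Ec(1)[of I E \<nu> t]
  by (subst LINT_Icc_cong_open[where g="\<lambda>x. Ec E (\<nu>, t, x)"]) auto
lemma Kmom_KE: "good I E \<Longrightarrow> \<nu> > 0 \<Longrightarrow> t \<in> {0..Z} \<Longrightarrow> Kmom (I \<nu>) t = KE E \<nu> t"
  unfolding Kmom_def KE_def using good_Ec(1)[of I E \<nu> t]
  by (subst LINT_Icc_cong_open[where g="\<lambda>x. x^2 * Ec E (\<nu>, t, x)"]) auto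

lemma JE_bounds: assumes "good I E" "\<nu> > 0" "t \<in> {0..Z}"
  shows "0 \<le> JE E \<nu> t" "JE E \<nu> t \<le> Bb \<nu>"
proof -
  have b: "\<And>x. x \<in> {-1..1} \<Longrightarrow> 0 \<le> Ec E (\<nu>, t, x) \<and> Ec E (\<nu>, t, x) \<le> Bb \<nu>" using good_Ec(2)[OF assms] by blast
  note kb = kint_bounds[where K="\<lambda>_. 1" and a="-1" and b=1, OF continuous_on_const _ good_Ec(3)[OF assms] b]
  show "0 \<le> JE E \<nu> t" using kb(1) by (simp add: JE_def)
  show "JE E \<nu> t \<le> Bb \<nu>" using kb(2)[unfolded LINT_one] by (simp add: JE_def)
qed

definition SE :: "(real \<times> real \<times> real \<Rightarrow> real) \<Rightarrow> real \<Rightarrow> real \<Rightarrow> real \<Rightarrow> real" where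
  "SE E \<nu> t \<mu> = (3 - \<mu>^2) * JE E \<nu> t + (3 * \<mu>^2 - 1) * KE E \<nu> t"

lemma SE_eq: assumes "good I E" "\<nu> > 0" "t \<in> {0..Z}"
  shows "SE E \<nu> t \<mu> = 1/2 * (LINT x:{-1..1}|lborel. ((3 - \<mu>^2) + (3 * \<mu>^2 - 1) * x^2) * Ec E (\<nu>, t, x))"
proof -
  have b: "\<And>x. x \<in> {-1..1} \<Longrightarrow> \<bar>Ec E (\<nu>, t, x)\<bar> \<le> Bb \<nu>" using good_Ec(2)[OF assms] by (simp add: abs_le_iff)
  have i1: "set_integrable lborel {-1..1} (\<lambda>x. 1 * Ec E (\<nu>, t, x))"
    by (rule kint_integrable[OF continuous_on_const good_Ec(3)[OF assms] b])
  have c2: "continuous_on UNIV (\<lambda>x::real. x^2)" by (intro continuous_intros)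
  have i2: "set_integrable lborel {-1..1} (\<lambda>x. x^2 * Ec E (\<nu>, t, x))"
    by (rule kint_integrable[OF c2 good_Ec(3)[OF assms] b])
  show ?thesis unfolding SE_def JE_def KE_def using scat_lin[of "{-1..1}" "\<lambda>x. Ec E (\<nu>, t, x)"] i1 i2 by simp
qed

lemma SE_bounds: assumes "good I E" "\<nu> > 0" "t \<in> {0..Z}" "\<bar>\<mu>\<bar> \<le> 1"
  shows "0 \<le> SE E \<nu> t \<mu>" "SE E \<nu> t \<mu> \<le> 8/3 * Bb \<nu>"
proof -
  have b: "\<And>x. x \<in> {-1..1} \<Longrightarrow> 0 \<le> Ec E (\<nu>, t, x) \<and> Ec E (\<nu>, t, x) \<le> Bb \<nu>" using good_Ec(2)[OF assms(1-3)] by blast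
  have K: "continuous_on UNIV (\<lambda>x::real. (3 - \<mu>^2) + (3 * \<mu>^2 - 1) * x^2)" by (intro continuous_intros)
  have Kn: "\<And>x. x \<in> {-1..1} \<Longrightarrow> 0 \<le> (3 - \<mu>^2) + (3 * \<mu>^2 - 1) * x^2"
    using assms(4) by (intro scat_kernel_nonneg) auto
  note kb = kint_bounds[where a="-1" and b=1, OF K Kn good_Ec(3)[OF assms(1-3)] b]
  show "0 \<le> SE E \<nu> t \<mu>" using kb(1) SE_eq[OF assms(1-3), of \<mu>] by linarith
  show "SE E \<nu> t \<mu> \<le> 8/3 * Bb \<nu>" using kb(2)[unfolded scat_kernel_int] SE_eq[OF assms(1-3), of \<mu>] by linarith
qed

lemma JE_mono: assumes "good I1 E1" "good I2 E2" "\<nu> > 0" "t \<in> {0..Z}"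
  and le: "\<And>\<mu>. Rg \<nu> t \<mu> \<Longrightarrow> I1 \<nu> t \<mu> \<le> I2 \<nu> t \<mu>"
  shows "JE E1 \<nu> t \<le> JE E2 \<nu> t"
proof -
  have b1: "\<And>x. x \<in> {-1..1} \<Longrightarrow> \<bar>Ec E1 (\<nu>, t, x)\<bar> \<le> Bb \<nu>" using good_Ec(2)[OF assms(1,3,4)] by (simp add: abs_le_iff)
  have b2: "\<And>x. x \<in> {-1..1} \<Longrightarrow> \<bar>Ec E2 (\<nu>, t, x)\<bar> \<le> Bb \<nu>" using good_Ec(2)[OF assms(2,3,4)] by (simp add: abs_le_iff)
  have "(LINT x:{-1..1}|lborel. 1 * Ec E1 (\<nu>, t, x)) \<le> (LINT x:{-1..1}|lborel. 1 * Ec E2 (\<nu>, t, x))"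
  proof (rule kint_mono[where a="-1" and b=1, OF continuous_on_const _ good_Ec(3)[OF assms(1,3,4)] b1 good_Ec(3)[OF assms(2,3,4)] b2])
    fix x :: real assume "x \<in> {-1..1}"
    then show "Ec E1 (\<nu>, t, x) \<le> Ec E2 (\<nu>, t, x)"
      using le[of x] good_Ec(1)[OF assms(1,3,4), of x] good_Ec(1)[OF assms(2,3,4), of x] assms(3,4)
      by (cases "x \<in> {-1<..<1}") (auto simp: Rg_def Ec_def)
  qed simp
  then show ?thesis by (simp add: JE_def)
qed

lemma SE_mono: assumes "good I1 E1" "good I2 E2" "\<nu> > 0" "t \<in> {0..Z}" "\<bar>\<mu>\<bar> \<le> 1"
  and le: "\<And>\<mu>. Rg \<nu> t \<mu> \<Longrightarrow> I1 \<nu> t \<mu> \<le> I2 \<nu> t \<mu>"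
  shows "SE E1 \<nu> t \<mu> \<le> SE E2 \<nu> t \<mu>"
proof -
  have b1: "\<And>x. x \<in> {-1..1} \<Longrightarrow> \<bar>Ec E1 (\<nu>, t, x)\<bar> \<le> Bb \<nu>" using good_Ec(2)[OF assms(1,3,4)] by (simp add: abs_le_iff)
  have b2: "\<And>x. x \<in> {-1..1} \<Longrightarrow> \<bar>Ec E2 (\<nu>, t, x)\<bar> \<le> Bb \<nu>" using good_Ec(2)[OF assms(2,3,4)] by (simp add: abs_le_iff)
  have K: "continuous_on UNIV (\<lambda>x::real. (3 - \<mu>^2) + (3 * \<mu>^2 - 1) * x^2)" by (intro continuous_intros)
  have Kn: "\<And>x. x \<in> {-1..1} \<Longrightarrow> 0 \<le> (3 - \<mu>^2) + (3 * \<mu>^2 - 1) * x^2"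
    using assms(5) by (intro scat_kernel_nonneg) auto
  have "(LINT x:{-1..1}|lborel. ((3 - \<mu>^2) + (3 * \<mu>^2 - 1) * x^2) * Ec E1 (\<nu>, t, x))
      \<le> (LINT x:{-1..1}|lborel. ((3 - \<mu>^2) + (3 * \<mu>^2 - 1) * x^2) * Ec E2 (\<nu>, t, x))"
  proof (rule kint_mono[where a="-1" and b=1, OF K Kn good_Ec(3)[OF assms(1,3,4)] b1 good_Ec(3)[OF assms(2,3,4)] b2])
    fix x :: real assume "x \<in> {-1..1}"
    then show "Ec E1 (\<nu>, t, x) \<le> Ec E2 (\<nu>, t, x)"
      using le[of x] good_Ec(1)[OF assms(1,3,4), of x] good_Ec(1)[OF assms(2,3,4), of x] assms(3,4)
      by (cases "x \<in> {-1<..<1}") (auto simp: Rg_def Ec_def)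
  qed
  then show ?thesis using SE_eq[OF assms(1,3,4), of \<mu>] SE_eq[OF assms(2,3,4), of \<mu>] by linarith
qed

end

lemma sbm_agree:
  fixes s Sm :: "real \<Rightarrow> real"
  assumes "Sm \<in> borel_measurable borel" "\<And>t. t \<in> A \<Longrightarrow> s t = Sm t" "A \<in> sets borel"
  shows "set_borel_measurable lborel A s"
proof -
  have "(\<lambda>t. indicator A t *\<^sub>R s t) = (\<lambda>t. indicator A t *\<^sub>R Sm t)"
    using assms(2) by (auto simp: fun_eq_iff indicator_def)
  moreover have "(\<lambda>t. indicator A t *\<^sub>R Sm t) \<in> borel_measurable borel"
    using assms(1,3) by (intro borel_measurable_scaleR borel_measurable_indicator) auto
  ultimately show ?thesis unfolding set_borel_measurable_def by simp
qed

context rte begin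

definition Sx :: "(real \<times> real \<times> real \<Rightarrow> real) \<Rightarrow> (real \<Rightarrow> real) \<Rightarrow> real \<Rightarrow> real \<Rightarrow> real \<Rightarrow> real" where
  "Sx E T \<nu> t \<mu> = \<kappa>' \<nu> * (1 - (ai' \<nu> + ar' \<nu>)) * B \<nu> (Tg T t) + \<kappa>' \<nu> * ai' \<nu> * JE E \<nu> t
     + 3/8 * \<kappa>' \<nu> * ar' \<nu> * SE E \<nu> t \<mu>"

lemma Sx_meas[measurable]:
  assumes [measurable]: "E \<in> borel_measurable (borel \<Otimes>\<^sub>M (borel \<Otimes>\<^sub>M borel))" "Tg T \<in> borel_measurable borel"
  shows "(\<lambda>x. Sx E T (fst x) (fst (snd x)) (snd (snd x))) \<in> borel_measurable (borel \<Otimes>\<^sub>M (borel \<Otimes>\<^sub>M borel))"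
  unfolding Sx_def SE_def by measurable

lemma Sx_meas_raw[measurable (raw)]:
  "E \<in> borel_measurable (borel \<Otimes>\<^sub>M (borel \<Otimes>\<^sub>M borel)) \<Longrightarrow> Tg T \<in> borel_measurable borel \<Longrightarrow>
   u \<in> borel_measurable M \<Longrightarrow> v \<in> borel_measurable M \<Longrightarrow> k \<in> borel_measurable M \<Longrightarrow>
   (\<lambda>x. Sx E T (u x) (v x) (k x)) \<in> borel_measurable M"
  using measurable_compose[OF measurable_Pair[OF _ measurable_Pair] Sx_meas[of E T]] by simp

lemma src_eq: assumes "good I E" "\<nu> > 0" "t \<in> {0..Z}"
  shows "src hb c kB \<kappa> ai ar I T \<nu> t \<mu> = Sx E T \<nu> t \<mu>"
  unfolding src_def Sx_def SE_def Jmom_JE[OF assms] Kmom_KE[OF assms] using assms(2,3)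
  by (simp add: \<kappa>'_def ai'_def ar'_def Tg_def)

lemma src_bounds: assumes "good I E" "goodT T" "\<nu> > 0" "t \<in> {0..Z}" "\<bar>\<mu>\<bar> \<le> 1"
  shows "0 \<le> Sx E T \<nu> t \<mu>" "Sx E T \<nu> t \<mu> \<le> \<kappa> \<nu> * Bb \<nu>"
proof -
  have k: "0 < \<kappa> \<nu>" using \<kappa>_bd assms(3) by auto
  have a: "0 \<le> ai \<nu>" "0 \<le> ar \<nu>" "ai \<nu> + ar \<nu> < 1" using a_bd assms(3) by auto
  have T: "0 \<le> T t" "T t \<le> Ts" using assms(2,4) by (auto simp: goodT_def)
  have B1: "0 \<le> B \<nu> (Tg T t)" "B \<nu> (Tg T t) \<le> Bb \<nu>"
    using B_nonneg[of \<nu>] B_mono[of \<nu> "T t" Ts] T assms by (auto simp: Tg_def Bb_def)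
  have J: "0 \<le> JE E \<nu> t" "JE E \<nu> t \<le> Bb \<nu>" using JE_bounds[OF assms(1,3,4)] by auto
  have S: "0 \<le> SE E \<nu> t \<mu>" "SE E \<nu> t \<mu> \<le> 8/3 * Bb \<nu>" using SE_bounds[OF assms(1,3,4,5)] by auto
  have c1: "0 \<le> \<kappa> \<nu> * (1 - (ai \<nu> + ar \<nu>))" using k a by simp
  have c2: "0 \<le> \<kappa> \<nu> * ai \<nu>" using k a by simp
  have c3: "0 \<le> 3/8 * \<kappa> \<nu> * ar \<nu>" using k a by simp
  have e: "Sx E T \<nu> t \<mu> = \<kappa> \<nu> * (1 - (ai \<nu> + ar \<nu>)) * B \<nu> (Tg T t) + \<kappa> \<nu> * ai \<nu> * JE E \<nu> t
     + 3/8 * \<kappa> \<nu> * ar \<nu> * SE E \<nu> t \<mu>"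
    using assms(3) by (simp add: Sx_def \<kappa>'_def ai'_def ar'_def)
  show "0 \<le> Sx E T \<nu> t \<mu>" unfolding e using c1 c2 c3 B1 J S by simp
  have "\<kappa> \<nu> * (1 - (ai \<nu> + ar \<nu>)) * B \<nu> (Tg T t) \<le> \<kappa> \<nu> * (1 - (ai \<nu> + ar \<nu>)) * Bb \<nu>"
    using c1 B1 by (intro mult_left_mono) auto
  moreover have "\<kappa> \<nu> * ai \<nu> * JE E \<nu> t \<le> \<kappa> \<nu> * ai \<nu> * Bb \<nu>"
    using c2 J by (intro mult_left_mono) auto
  moreover have "3/8 * \<kappa> \<nu> * ar \<nu> * SE E \<nu> t \<mu> \<le> 3/8 * \<kappa> \<nu> * ar \<nu> * (8/3 * Bb \<nu>)"
    using c3 S by (intro mult_left_mono) auto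
  moreover have "\<kappa> \<nu> * (1 - (ai \<nu> + ar \<nu>)) * Bb \<nu> + \<kappa> \<nu> * ai \<nu> * Bb \<nu> + 3/8 * \<kappa> \<nu> * ar \<nu> * (8/3 * Bb \<nu>)
      = \<kappa> \<nu> * Bb \<nu>" by (simp add: algebra_simps)
  ultimately show "Sx E T \<nu> t \<mu> \<le> \<kappa> \<nu> * Bb \<nu>" unfolding e by linarith
qed

lemma src_mono: assumes "good I1 E1" "good I2 E2" "goodT T1" "goodT T2" "\<nu> > 0" "t \<in> {0..Z}" "\<bar>\<mu>\<bar> \<le> 1"
  and leI: "\<And>\<mu>. Rg \<nu> t \<mu> \<Longrightarrow> I1 \<nu> t \<mu> \<le> I2 \<nu> t \<mu>" and leT: "T1 t \<le> T2 t"
  shows "Sx E1 T1 \<nu> t \<mu> \<le> Sx E2 T2 \<nu> t \<mu>"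
proof -
  have k: "0 < \<kappa> \<nu>" using \<kappa>_bd assms(5) by auto
  have a: "0 \<le> ai \<nu>" "0 \<le> ar \<nu>" "ai \<nu> + ar \<nu> < 1" using a_bd assms(5) by auto
  have c1: "0 \<le> \<kappa> \<nu> * (1 - (ai \<nu> + ar \<nu>))" using k a by simp
  have c2: "0 \<le> \<kappa> \<nu> * ai \<nu>" using k a by simp
  have c3: "0 \<le> 3/8 * \<kappa> \<nu> * ar \<nu>" using k a by simp
  have B: "B \<nu> (Tg T1 t) \<le> B \<nu> (Tg T2 t)" using B_mono[OF assms(5) leT] assms(6) by (simp add: Tg_def)
  have J: "JE E1 \<nu> t \<le> JE E2 \<nu> t" by (rule JE_mono[OF assms(1,2,5,6) leI])
  have S: "SE E1 \<nu> t \<mu> \<le> SE E2 \<nu> t \<mu>" by (rule SE_mono[OF assms(1,2,5,6,7) leI])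
  have e: "Sx E T \<nu> t \<mu> = \<kappa> \<nu> * (1 - (ai \<nu> + ar \<nu>)) * B \<nu> (Tg T t) + \<kappa> \<nu> * ai \<nu> * JE E \<nu> t
     + 3/8 * \<kappa> \<nu> * ar \<nu> * SE E \<nu> t \<mu>" for E T
    using assms(5) by (simp add: Sx_def \<kappa>'_def ai'_def ar'_def)
  have "\<kappa> \<nu> * (1 - (ai \<nu> + ar \<nu>)) * B \<nu> (Tg T1 t) \<le> \<kappa> \<nu> * (1 - (ai \<nu> + ar \<nu>)) * B \<nu> (Tg T2 t)"
    using c1 B by (intro mult_left_mono) auto
  moreover have "\<kappa> \<nu> * ai \<nu> * JE E1 \<nu> t \<le> \<kappa> \<nu> * ai \<nu> * JE E2 \<nu> t"
    using c2 J by (intro mult_left_mono) auto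
  moreover have "3/8 * \<kappa> \<nu> * ar \<nu> * SE E1 \<nu> t \<mu> \<le> 3/8 * \<kappa> \<nu> * ar \<nu> * SE E2 \<nu> t \<mu>"
    using c3 S by (intro mult_left_mono) auto
  ultimately show ?thesis unfolding e by linarith
qed

lemma charsol_eq: assumes "good I E" "Rg \<nu> \<tau> \<mu>"
  shows "charsol \<kappa> Qp Qm Z (src hb c kB \<kappa> ai ar I T) \<nu> \<tau> \<mu> = charsol \<kappa>' Qp' Qm' Z (Sx E T) \<nu> \<tau> \<mu>"
proof -
  have r: "\<nu> > 0" "0 \<le> \<tau>" "\<tau> \<le> Z" "-1 < \<mu>" "\<mu> < 1" using assms(2) by (auto simp: Rg_def)
  have i1: "(LINT t:{0..\<tau>}|lborel. exp (- \<kappa> \<nu> * (\<tau> - t) / \<mu>) * (1 / \<mu>) * src hb c kB \<kappa> ai ar I T \<nu> t \<mu>)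
     = (LINT t:{0..\<tau>}|lborel. exp (- \<kappa>' \<nu> * (\<tau> - t) / \<mu>) * (1 / \<mu>) * Sx E T \<nu> t \<mu>)"
    by (rule set_lebesgue_integral_cong) (use r in \<open>auto simp: \<kappa>'_def src_eq[OF assms(1)]\<close>)
  have i2: "(LINT t:{\<tau>..Z}|lborel. exp (- \<kappa> \<nu> * (t - \<tau>) / \<bar>\<mu>\<bar>) * (1 / \<bar>\<mu>\<bar>) * src hb c kB \<kappa> ai ar I T \<nu> t \<mu>)
     = (LINT t:{\<tau>..Z}|lborel. exp (- \<kappa>' \<nu> * (t - \<tau>) / \<bar>\<mu>\<bar>) * (1 / \<bar>\<mu>\<bar>) * Sx E T \<nu> t \<mu>)"
    by (rule set_lebesgue_integral_cong) (use r in \<open>auto simp: \<kappa>'_def src_eq[OF assms(1)]\<close>)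
  show ?thesis unfolding charsol_def i1 i2 using r by (simp add: \<kappa>'_def Qp'_def Qm'_def)
qed

definition CE :: "(real \<times> real \<times> real \<Rightarrow> real) \<Rightarrow> (real \<Rightarrow> real) \<Rightarrow> real \<times> real \<times> real \<Rightarrow> real" where
  "CE E T x = charsol \<kappa>' Qp' Qm' Z (Sx E T) (fst x) (fst (snd x)) (snd (snd x))"

lemma CE_meas:
  assumes [measurable]: "E \<in> borel_measurable (borel \<Otimes>\<^sub>M (borel \<Otimes>\<^sub>M borel))" "Tg T \<in> borel_measurable borel"
  shows "CE E T \<in> borel_measurable (borel \<Otimes>\<^sub>M (borel \<Otimes>\<^sub>M borel))"
  unfolding CE_def charsol_def set_lebesgue_integral_def indicator_def atLeastAtMost_iff
  by measurable

end

context rte begin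

definition msec :: "(real \<Rightarrow> real \<Rightarrow> real \<Rightarrow> real) \<Rightarrow> real \<Rightarrow> real \<Rightarrow> bool" where
  "msec S \<nu> \<mu> \<longleftrightarrow> (\<exists>h \<in> borel_measurable borel. \<forall>t\<in>{0..Z}. S \<nu> t \<mu> = h t)"

lemma msec_sbm: assumes "msec S \<nu> \<mu>" "{a..b} \<subseteq> {0..Z}"
  shows "set_borel_measurable lborel {a..b} (\<lambda>t. S \<nu> t \<mu>)"
proof -
  obtain h where h: "h \<in> borel_measurable borel" "\<And>t. t\<in>{0..Z} \<Longrightarrow> S \<nu> t \<mu> = h t"
    using assms(1) by (auto simp: msec_def)
  show ?thesis by (rule sbm_agree[OF h(1)]) (use h(2) assms(2) in auto)
qed

lemma msec_src: assumes "good I E" "goodT T" "\<nu> > 0" shows "msec (src hb c kB \<kappa> ai ar I T) \<nu> \<mu>"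
proof -
  have [measurable]: "E \<in> borel_measurable (borel \<Otimes>\<^sub>M (borel \<Otimes>\<^sub>M borel))" "Tg T \<in> borel_measurable borel"
    using assms by (auto simp: good_def goodT_def)
  have m: "(\<lambda>t. Sx E T \<nu> t \<mu>) \<in> borel_measurable borel" by measurable
  show ?thesis unfolding msec_def
    by (rule bexI[OF _ m]) (use src_eq[OF assms(1) assms(3)] in auto)
qed

lemma charsol_pos_form: "\<mu> > 0 \<Longrightarrow> charsol \<kappa> Qp Qm Z S \<nu> \<tau> \<mu> =
   exp (- \<kappa> \<nu> * \<tau> / \<mu>) * Qp \<nu> \<mu> + (LINT t:{0..\<tau>}|lborel. (exp (- \<kappa> \<nu> * (\<tau> - t) / \<mu>) * (1 / \<mu>)) * S \<nu> t \<mu>)"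
  by (simp add: charsol_def)
lemma charsol_neg_form: "\<mu> < 0 \<Longrightarrow> charsol \<kappa> Qp Qm Z S \<nu> \<tau> \<mu> =
   exp (- \<kappa> \<nu> * (Z - \<tau>) / \<bar>\<mu>\<bar>) * Qm \<nu> \<bar>\<mu>\<bar> + (LINT t:{\<tau>..Z}|lborel. (exp (- \<kappa> \<nu> * (t - \<tau>) / \<bar>\<mu>\<bar>) * (1 / \<bar>\<mu>\<bar>)) * S \<nu> t \<mu>)"
  by (simp add: charsol_def)
lemma charsol_zero: "charsol \<kappa> Qp Qm Z S \<nu> \<tau> 0 = 0"
  by (simp add: charsol_def)

lemma charsol_bnd:
  assumes R: "Rg \<nu> \<tau> \<mu>" and ms: "msec S \<nu> \<mu>"
    and bd: "\<And>t. t \<in> {0..Z} \<Longrightarrow> 0 \<le> S \<nu> t \<mu> \<and> S \<nu> t \<mu> \<le> \<kappa> \<nu> * Bb \<nu>"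
  shows "0 \<le> charsol \<kappa> Qp Qm Z S \<nu> \<tau> \<mu> \<and> charsol \<kappa> Qp Qm Z S \<nu> \<tau> \<mu> \<le> Bb \<nu>"
proof -
  have r: "\<nu> > 0" "0 \<le> \<tau>" "\<tau> \<le> Z" "-1 < \<mu>" "\<mu> < 1" using R by (auto simp: Rg_def)
  have k: "\<kappa> \<nu> > 0" using \<kappa>_bd r by auto
  have Bb0: "0 \<le> Bb \<nu>" using Bb_nonneg r by simp
  consider "\<mu> > 0" | "\<mu> < 0" | "\<mu> = 0" by linarith
  then show ?thesis
  proof cases
    case 1
    define e where "e = exp (- \<kappa> \<nu> * \<tau> / \<mu>)"
    have e: "0 < e" "e \<le> 1" using k r 1 by (auto simp: e_def)
    have q: "0 \<le> Qp \<nu> \<mu>" "Qp \<nu> \<mu> \<le> Bb \<nu>" using Q_bd[of \<mu> \<nu>] Q_le_Bb[of \<mu> \<nu>] r 1 by auto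
    have K: "continuous_on UNIV (\<lambda>t. exp (- \<kappa> \<nu> * (\<tau> - t) / \<mu>) * (1 / \<mu>))" using 1 by (intro continuous_intros) auto
    have Kn: "\<And>t. t \<in> {0..\<tau>} \<Longrightarrow> 0 \<le> exp (- \<kappa> \<nu> * (\<tau> - t) / \<mu>) * (1 / \<mu>)" using 1 by simp
    have sub: "{0..\<tau>} \<subseteq> {0..Z}" using r by auto
    have bd': "\<And>t. t \<in> {0..\<tau>} \<Longrightarrow> 0 \<le> S \<nu> t \<mu> \<and> S \<nu> t \<mu> \<le> \<kappa> \<nu> * Bb \<nu>" using bd sub by auto
    note kb = kint_bounds[OF K Kn msec_sbm[OF ms sub] bd']
    have KI: "(LINT t:{0..\<tau>}|lborel. exp (- \<kappa> \<nu> * (\<tau> - t) / \<mu>) * (1 / \<mu>)) = (1 - e) / \<kappa> \<nu>"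
      unfolding e_def by (rule kern_int_pos[OF k 1 r(2)])
    have kk: "\<kappa> \<nu> * Bb \<nu> * ((1 - e) / \<kappa> \<nu>) = Bb \<nu> * (1 - e)" using k by simp
    have L: "0 \<le> (LINT t:{0..\<tau>}|lborel. (exp (- \<kappa> \<nu> * (\<tau> - t) / \<mu>) * (1 / \<mu>)) * S \<nu> t \<mu>)"
      "(LINT t:{0..\<tau>}|lborel. (exp (- \<kappa> \<nu> * (\<tau> - t) / \<mu>) * (1 / \<mu>)) * S \<nu> t \<mu>) \<le> Bb \<nu> * (1 - e)"
      using kb(1) kb(2)[unfolded KI kk] by auto
    have "e * Qp \<nu> \<mu> \<le> e * Bb \<nu>" using e q by (intro mult_left_mono) auto
    moreover have "0 \<le> e * Qp \<nu> \<mu>" using e q by simp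
    ultimately show ?thesis using L 1 unfolding charsol_pos_form[OF 1] e_def[symmetric]
      by (simp add: algebra_simps)
  next
    case 2
    define m where "m = \<bar>\<mu>\<bar>"
    have m: "m > 0" "m < 1" using 2 r by (auto simp: m_def)
    define e where "e = exp (- \<kappa> \<nu> * (Z - \<tau>) / m)"
    have e: "0 < e" "e \<le> 1" using k r m by (auto simp: e_def)
    have q: "0 \<le> Qm \<nu> m" "Qm \<nu> m \<le> Bb \<nu>" using Q_bd[of m \<nu>] Q_le_Bb[of m \<nu>] r m by auto
    have K: "continuous_on UNIV (\<lambda>t. exp (- \<kappa> \<nu> * (t - \<tau>) / m) * (1 / m))" using m by (intro continuous_intros) auto
    have Kn: "\<And>t. t \<in> {\<tau>..Z} \<Longrightarrow> 0 \<le> exp (- \<kappa> \<nu> * (t - \<tau>) / m) * (1 / m)" using m by simp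
    have sub: "{\<tau>..Z} \<subseteq> {0..Z}" using r by auto
    have bd': "\<And>t. t \<in> {\<tau>..Z} \<Longrightarrow> 0 \<le> S \<nu> t \<mu> \<and> S \<nu> t \<mu> \<le> \<kappa> \<nu> * Bb \<nu>" using bd sub by auto
    note kb = kint_bounds[OF K Kn msec_sbm[OF ms sub] bd']
    have KI: "(LINT t:{\<tau>..Z}|lborel. exp (- \<kappa> \<nu> * (t - \<tau>) / m) * (1 / m)) = (1 - e) / \<kappa> \<nu>"
      unfolding e_def by (rule kern_int_neg[OF k m(1) r(3)])
    have kk: "\<kappa> \<nu> * Bb \<nu> * ((1 - e) / \<kappa> \<nu>) = Bb \<nu> * (1 - e)" using k by simp
    have L: "0 \<le> (LINT t:{\<tau>..Z}|lborel. (exp (- \<kappa> \<nu> * (t - \<tau>) / m) * (1 / m)) * S \<nu> t \<mu>)"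
      "(LINT t:{\<tau>..Z}|lborel. (exp (- \<kappa> \<nu> * (t - \<tau>) / m) * (1 / m)) * S \<nu> t \<mu>) \<le> Bb \<nu> * (1 - e)"
      using kb(1) kb(2)[unfolded KI kk] by auto
    have "e * Qm \<nu> m \<le> e * Bb \<nu>" using e q by (intro mult_left_mono) auto
    moreover have "0 \<le> e * Qm \<nu> m" using e q by simp
    ultimately show ?thesis using L 2 unfolding charsol_neg_form[OF 2] m_def[symmetric] e_def[symmetric]
      by (simp add: algebra_simps)
  next
    case 3 then show ?thesis using Bb0 by (simp add: charsol_zero)
  qed
qed

lemma charsol_mono:
  assumes R: "Rg \<nu> \<tau> \<mu>" and ms1: "msec S1 \<nu> \<mu>" and ms2: "msec S2 \<nu> \<mu>"
    and b1: "\<And>t. t \<in> {0..Z} \<Longrightarrow> \<bar>S1 \<nu> t \<mu>\<bar> \<le> C" and b2: "\<And>t. t \<in> {0..Z} \<Longrightarrow> \<bar>S2 \<nu> t \<mu>\<bar> \<le> C"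
    and le: "\<And>t. t \<in> {0..Z} \<Longrightarrow> S1 \<nu> t \<mu> \<le> S2 \<nu> t \<mu>"
  shows "charsol \<kappa> Qp Qm Z S1 \<nu> \<tau> \<mu> \<le> charsol \<kappa> Qp Qm Z S2 \<nu> \<tau> \<mu>"
proof -
  have r: "\<nu> > 0" "0 \<le> \<tau>" "\<tau> \<le> Z" "-1 < \<mu>" "\<mu> < 1" using R by (auto simp: Rg_def)
  consider "\<mu> > 0" | "\<mu> < 0" | "\<mu> = 0" by linarith
  then show ?thesis
  proof cases
    case 1
    have K: "continuous_on UNIV (\<lambda>t. exp (- \<kappa> \<nu> * (\<tau> - t) / \<mu>) * (1 / \<mu>))" using 1 by (intro continuous_intros) auto
    have Kn: "\<And>t. t \<in> {0..\<tau>} \<Longrightarrow> 0 \<le> exp (- \<kappa> \<nu> * (\<tau> - t) / \<mu>) * (1 / \<mu>)" using 1 by simp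
    have sub: "{0..\<tau>} \<subseteq> {0..Z}" using r by auto
    have "(LINT t:{0..\<tau>}|lborel. (exp (- \<kappa> \<nu> * (\<tau> - t) / \<mu>) * (1 / \<mu>)) * S1 \<nu> t \<mu>)
       \<le> (LINT t:{0..\<tau>}|lborel. (exp (- \<kappa> \<nu> * (\<tau> - t) / \<mu>) * (1 / \<mu>)) * S2 \<nu> t \<mu>)"
      by (rule kint_mono[where C=C, OF K Kn msec_sbm[OF ms1 sub] _ msec_sbm[OF ms2 sub]])
         (use sub b1 b2 le in auto)
    then show ?thesis unfolding charsol_pos_form[OF 1] by simp
  next
    case 2
    have K: "continuous_on UNIV (\<lambda>t. exp (- \<kappa> \<nu> * (t - \<tau>) / \<bar>\<mu>\<bar>) * (1 / \<bar>\<mu>\<bar>))" using 2 by (intro continuous_intros) auto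
    have Kn: "\<And>t. t \<in> {\<tau>..Z} \<Longrightarrow> 0 \<le> exp (- \<kappa> \<nu> * (t - \<tau>) / \<bar>\<mu>\<bar>) * (1 / \<bar>\<mu>\<bar>)" by simp
    have sub: "{\<tau>..Z} \<subseteq> {0..Z}" using r by auto
    have "(LINT t:{\<tau>..Z}|lborel. (exp (- \<kappa> \<nu> * (t - \<tau>) / \<bar>\<mu>\<bar>) * (1 / \<bar>\<mu>\<bar>)) * S1 \<nu> t \<mu>)
       \<le> (LINT t:{\<tau>..Z}|lborel. (exp (- \<kappa> \<nu> * (t - \<tau>) / \<bar>\<mu>\<bar>) * (1 / \<bar>\<mu>\<bar>)) * S2 \<nu> t \<mu>)"
      by (rule kint_mono[where C=C, OF K Kn msec_sbm[OF ms1 sub] _ msec_sbm[OF ms2 sub]])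
         (use sub b1 b2 le in auto)
    then show ?thesis unfolding charsol_neg_form[OF 2] by simp
  next
    case 3 then show ?thesis by (simp add: charsol_zero)
  qed
qed

lemma charsol_lim:
  assumes R: "Rg \<nu> \<tau> \<mu>" and ms: "\<And>n. msec (S n) \<nu> \<mu>" and ms0: "msec S0 \<nu> \<mu>"
    and b: "\<And>n t. t \<in> {0..Z} \<Longrightarrow> \<bar>S n \<nu> t \<mu>\<bar> \<le> C"
    and lim: "\<And>t. t \<in> {0..Z} \<Longrightarrow> (\<lambda>n. S n \<nu> t \<mu>) \<longlonglongrightarrow> S0 \<nu> t \<mu>"
  shows "(\<lambda>n. charsol \<kappa> Qp Qm Z (S n) \<nu> \<tau> \<mu>) \<longlonglongrightarrow> charsol \<kappa> Qp Qm Z S0 \<nu> \<tau> \<mu>"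
proof -
  have r: "\<nu> > 0" "0 \<le> \<tau>" "\<tau> \<le> Z" "-1 < \<mu>" "\<mu> < 1" using R by (auto simp: Rg_def)
  consider "\<mu> > 0" | "\<mu> < 0" | "\<mu> = 0" by linarith
  then show ?thesis
  proof cases
    case 1
    have K: "continuous_on UNIV (\<lambda>t. exp (- \<kappa> \<nu> * (\<tau> - t) / \<mu>) * (1 / \<mu>))" using 1 by (intro continuous_intros) auto
    have sub: "{0..\<tau>} \<subseteq> {0..Z}" using r by auto
    have "(\<lambda>n. LINT t:{0..\<tau>}|lborel. (exp (- \<kappa> \<nu> * (\<tau> - t) / \<mu>) * (1 / \<mu>)) * S n \<nu> t \<mu>)
       \<longlonglongrightarrow> (LINT t:{0..\<tau>}|lborel. (exp (- \<kappa> \<nu> * (\<tau> - t) / \<mu>) * (1 / \<mu>)) * S0 \<nu> t \<mu>)"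
      by (rule kint_lim[where C=C, OF K msec_sbm[OF ms sub] msec_sbm[OF ms0 sub]])
         (use sub b lim in auto)
    then show ?thesis unfolding charsol_pos_form[OF 1] by (intro tendsto_add tendsto_const)
  next
    case 2
    have K: "continuous_on UNIV (\<lambda>t. exp (- \<kappa> \<nu> * (t - \<tau>) / \<bar>\<mu>\<bar>) * (1 / \<bar>\<mu>\<bar>))" using 2 by (intro continuous_intros) auto
    have sub: "{\<tau>..Z} \<subseteq> {0..Z}" using r by auto
    have "(\<lambda>n. LINT t:{\<tau>..Z}|lborel. (exp (- \<kappa> \<nu> * (t - \<tau>) / \<bar>\<mu>\<bar>) * (1 / \<bar>\<mu>\<bar>)) * S n \<nu> t \<mu>)
       \<longlonglongrightarrow> (LINT t:{\<tau>..Z}|lborel. (exp (- \<kappa> \<nu> * (t - \<tau>) / \<bar>\<mu>\<bar>) * (1 / \<bar>\<mu>\<bar>)) * S0 \<nu> t \<mu>)"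
      by (rule kint_lim[where C=C, OF K msec_sbm[OF ms sub] msec_sbm[OF ms0 sub]])
         (use sub b lim in auto)
    then show ?thesis unfolding charsol_neg_form[OF 2] by (intro tendsto_add tendsto_const)
  next
    case 3 then show ?thesis by (simp add: charsol_zero)
  qed
qed

end

lemma borel_measurable_nnint_lborel[measurable (raw)]:
  fixes f :: "'a \<Rightarrow> real \<Rightarrow> ennreal"
  assumes "case_prod f \<in> borel_measurable (N \<Otimes>\<^sub>M borel)"
  shows "(\<lambda>x. integral\<^sup>N lborel (f x)) \<in> borel_measurable N"
proof -
  have "case_prod f \<in> borel_measurable (N \<Otimes>\<^sub>M lborel)"
    using assms by (subst measurable_cong_sets[OF sets_pair_measure_cong[OF refl sets_lborel] refl])
  then show ?thesis by (rule lborel.borel_measurable_nn_integral)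
qed

context rte begin

abbreviation step :: "(real \<Rightarrow> real \<Rightarrow> real \<Rightarrow> real) \<Rightarrow> (real \<Rightarrow> real) \<Rightarrow> (real \<Rightarrow> real \<Rightarrow> real \<Rightarrow> real)" where
  "step I T \<equiv> charsol \<kappa> Qp Qm Z (src hb c kB \<kappa> ai ar I T)"

abbreviation stepT :: "(real \<Rightarrow> real \<Rightarrow> real \<Rightarrow> real) \<Rightarrow> (real \<Rightarrow> real)" where
  "stepT I \<equiv> Tof hb c kB \<kappa> (\<lambda>\<nu>. ai \<nu> + ar \<nu>) (\<lambda>\<nu> \<tau>. Jmom (I \<nu>) \<tau>)"

lemma src_bounds': assumes "good I E" "goodT T" "\<nu> > 0" "t \<in> {0..Z}" "\<bar>\<mu>\<bar> \<le> 1"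
  shows "0 \<le> src hb c kB \<kappa> ai ar I T \<nu> t \<mu> \<and> src hb c kB \<kappa> ai ar I T \<nu> t \<mu> \<le> \<kappa> \<nu> * Bb \<nu>"
  using src_bounds[OF assms] src_eq[OF assms(1,3,4)] by simp

lemma step_good: assumes "good I E" "goodT T"
  shows "good (step I T) (CE E T)"
  unfolding good_def
proof (intro conjI allI impI)
  show "CE E T \<in> borel_measurable (borel \<Otimes>\<^sub>M (borel \<Otimes>\<^sub>M borel))"
    using assms by (intro CE_meas) (auto simp: good_def goodT_def)
  fix \<nu> \<tau> \<mu> assume R: "Rg \<nu> \<tau> \<mu>"
  show "step I T \<nu> \<tau> \<mu> = CE E T (\<nu>, \<tau>, \<mu>)" using charsol_eq[OF assms(1) R] by (simp add: CE_def)
  have r: "\<nu> > 0" "\<bar>\<mu>\<bar> \<le> 1" using R by (auto simp: Rg_def)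
  have "0 \<le> step I T \<nu> \<tau> \<mu> \<and> step I T \<nu> \<tau> \<mu> \<le> Bb \<nu>"
    by (rule charsol_bnd[OF R msec_src[OF assms r(1)]]) (use src_bounds'[OF assms r(1) _ r(2)] in auto)
  then show "0 \<le> step I T \<nu> \<tau> \<mu>" "step I T \<nu> \<tau> \<mu> \<le> Bb \<nu>" by auto
qed

lemma step_mono: assumes "good I1 E1" "good I2 E2" "goodT T1" "goodT T2"
  and leI: "\<And>\<nu> \<tau> \<mu>. Rg \<nu> \<tau> \<mu> \<Longrightarrow> I1 \<nu> \<tau> \<mu> \<le> I2 \<nu> \<tau> \<mu>" and leT: "\<And>t. t \<in> {0..Z} \<Longrightarrow> T1 t \<le> T2 t"
  and R: "Rg \<nu> \<tau> \<mu>"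
  shows "step I1 T1 \<nu> \<tau> \<mu> \<le> step I2 T2 \<nu> \<tau> \<mu>"
proof -
  have r: "\<nu> > 0" "\<bar>\<mu>\<bar> \<le> 1" using R by (auto simp: Rg_def)
  show ?thesis
  proof (rule charsol_mono[OF R msec_src[OF assms(1,3) r(1)] msec_src[OF assms(2,4) r(1)], where C="\<kappa> \<nu> * Bb \<nu>"])
    fix t :: real assume t: "t \<in> {0..Z}"
    show "\<bar>src hb c kB \<kappa> ai ar I1 T1 \<nu> t \<mu>\<bar> \<le> \<kappa> \<nu> * Bb \<nu>" using src_bounds'[OF assms(1,3) r(1) t r(2)] by auto
    show "\<bar>src hb c kB \<kappa> ai ar I2 T2 \<nu> t \<mu>\<bar> \<le> \<kappa> \<nu> * Bb \<nu>" using src_bounds'[OF assms(2,4) r(1) t r(2)] by auto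
    show "src hb c kB \<kappa> ai ar I1 T1 \<nu> t \<mu> \<le> src hb c kB \<kappa> ai ar I2 T2 \<nu> t \<mu>"
      unfolding src_eq[OF assms(1) r(1) t] src_eq[OF assms(2) r(1) t]
      by (rule src_mono[OF assms(1-4) r(1) t r(2) leI leT[OF t]])
  qed
qed

lemma Jmom_bounds: assumes "good I E" "\<nu> > 0" "\<tau> \<in> {0..Z}"
  shows "0 \<le> Jmom (I \<nu>) \<tau> \<and> Jmom (I \<nu>) \<tau> \<le> Bb \<nu>"
  using JE_bounds[OF assms] Jmom_JE[OF assms] by simp

lemma stepT_bounds: assumes "good I E" "\<tau> \<in> {0..Z}"
  shows "stepT I \<tau> \<in> {0..Ts}" "ennreal (f (stepT I \<tau>)) = g (\<lambda>\<nu> \<tau>. Jmom (I \<nu>) \<tau>) \<tau>"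
  using Tof_char[where J="\<lambda>\<nu> \<tau>. Jmom (I \<nu>) \<tau>" and \<tau>=\<tau>] Jmom_bounds[OF assms(1) _ assms(2)] by auto

lemma stepT_mono: assumes "good I1 E1" "good I2 E2" "\<tau> \<in> {0..Z}"
  and leI: "\<And>\<nu> \<tau> \<mu>. Rg \<nu> \<tau> \<mu> \<Longrightarrow> I1 \<nu> \<tau> \<mu> \<le> I2 \<nu> \<tau> \<mu>"
  shows "stepT I1 \<tau> \<le> stepT I2 \<tau>"
proof (rule Tof_mono)
  fix \<nu> :: real assume p: "\<nu> > 0"
  show "0 \<le> Jmom (I1 \<nu>) \<tau> \<and> Jmom (I1 \<nu>) \<tau> \<le> Bb \<nu>" by (rule Jmom_bounds[OF assms(1) p assms(3)])
  show "0 \<le> Jmom (I2 \<nu>) \<tau> \<and> Jmom (I2 \<nu>) \<tau> \<le> Bb \<nu>" by (rule Jmom_bounds[OF assms(2) p assms(3)])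
  show "Jmom (I1 \<nu>) \<tau> \<le> Jmom (I2 \<nu>) \<tau>"
    unfolding Jmom_JE[OF assms(1) p assms(3)] Jmom_JE[OF assms(2) p assms(3)]
    by (rule JE_mono[OF assms(1,2) p assms(3) leI])
qed

lemma g_JE: assumes "good I E" "\<tau> \<in> {0..Z}"
  shows "g (\<lambda>\<nu> \<tau>. Jmom (I \<nu>) \<tau>) \<tau> = (\<integral>\<^sup>+\<nu>. ennreal (w \<nu> * JE E \<nu> \<tau>) \<partial>lborel)"
  unfolding g_def
proof (intro nn_integral_cong)
  fix \<nu> :: real
  show "ennreal (w \<nu> * Jmom (I \<nu>) \<tau>) = ennreal (w \<nu> * JE E \<nu> \<tau>)"
    by (cases "\<nu> > 0") (auto simp: Jmom_JE[OF assms(1) _ assms(2)] w_def)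
qed

lemma stepT_good: assumes "good I E" shows "goodT (stepT I)"
  unfolding goodT_def
proof (intro conjI ballI)
  fix t assume "t \<in> {0..Z}"
  then show "0 \<le> stepT I t" "stepT I t \<le> Ts" using stepT_bounds(1)[OF assms] by auto
next
  have [measurable]: "E \<in> borel_measurable (borel \<Otimes>\<^sub>M (borel \<Otimes>\<^sub>M borel))" using assms by (simp add: good_def)
  define G where "G \<tau> = (\<integral>\<^sup>+\<nu>. ennreal (w \<nu> * JE E \<nu> \<tau>) \<partial>lborel)" for \<tau>
  have Gm[measurable]: "G \<in> borel_measurable borel" unfolding G_def by measurable
  show "Tg (stepT I) \<in> borel_measurable borel"
    unfolding borel_measurable_iff_le
  proof
    fix a :: real
    show "{x \<in> space borel. Tg (stepT I) x \<le> a} \<in> sets borel"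
    proof (cases "a \<ge> 0")
      case False
      have "\<not> Tg (stepT I) x \<le> a" for x
      proof (cases "x \<in> {0..Z}")
        case True then show ?thesis using False stepT_bounds(1)[OF assms True] by (simp add: Tg_def)
      qed (use False in \<open>auto simp: Tg_def\<close>)
      then have "{x \<in> space borel. Tg (stepT I) x \<le> a} = {}" by auto
      then show ?thesis by simp
    next
      case True
      have "{x \<in> space borel. Tg (stepT I) x \<le> a} = {x. x \<notin> {0..Z}} \<union> {x. x \<in> {0..Z} \<and> G x \<le> ennreal (f a)}"
      proof (intro set_eqI iffI)
        fix x assume x: "x \<in> {x \<in> space borel. Tg (stepT I) x \<le> a}"
        show "x \<in> {x. x \<notin> {0..Z}} \<union> {x. x \<in> {0..Z} \<and> G x \<le> ennreal (f a)}"
        proof (cases "x \<in> {0..Z}")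
          case True
          then have "stepT I x \<le> a" using x by (simp add: Tg_def)
          then have "g (\<lambda>\<nu> \<tau>. Jmom (I \<nu>) \<tau>) x \<le> ennreal (f a)"
            using Tof_level[where J="\<lambda>\<nu> \<tau>. Jmom (I \<nu>) \<tau>" and \<tau>=x and s=a] Jmom_bounds[OF assms _ True] \<open>a \<ge> 0\<close> by auto
          then show ?thesis using True g_JE[OF assms True] by (simp add: G_def)
        qed simp
      next
        fix x assume x: "x \<in> {x. x \<notin> {0..Z}} \<union> {x. x \<in> {0..Z} \<and> G x \<le> ennreal (f a)}"
        show "x \<in> {x \<in> space borel. Tg (stepT I) x \<le> a}"
        proof (cases "x \<in> {0..Z}")
          case True
          then have "g (\<lambda>\<nu> \<tau>. Jmom (I \<nu>) \<tau>) x \<le> ennreal (f a)"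
            using x g_JE[OF assms True] by (simp add: G_def)
          then have "stepT I x \<le> a"
            using Tof_level[where J="\<lambda>\<nu> \<tau>. Jmom (I \<nu>) \<tau>" and \<tau>=x and s=a] Jmom_bounds[OF assms _ True] \<open>a \<ge> 0\<close> by auto
          then show ?thesis using True by (simp add: Tg_def)
        qed (use \<open>a \<ge> 0\<close> in \<open>auto simp: Tg_def\<close>)
      qed
      moreover have "{x. x \<notin> {0..Z}} \<union> {x. x \<in> {0..Z} \<and> G x \<le> ennreal (f a)} \<in> sets borel"
        unfolding atLeastAtMost_iff by measurable
      ultimately show ?thesis by simp
    qed
  qed
qed

end

context rte begin

abbreviation It :: "nat \<Rightarrow> real \<Rightarrow> real \<Rightarrow> real \<Rightarrow> real" where
  "It n \<equiv> fst (rte_iter hb c kB \<kappa> ai ar Qp Qm Z n)"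
abbreviation Tt :: "nat \<Rightarrow> real \<Rightarrow> real" where
  "Tt n \<equiv> snd (rte_iter hb c kB \<kappa> ai ar Qp Qm Z n)"

lemma It_Suc: "It (Suc n) = step (It n) (Tt n)" by (simp add: Let_def)
lemma Tt_Suc: "Tt (Suc n) = stepT (It (Suc n))" by (simp add: Let_def)
lemma It_0: "It 0 = (\<lambda>\<nu> \<tau> \<mu>. 0)" by simp
lemma Tt_0: "Tt 0 = (\<lambda>\<tau>. 0)" by simp

lemma iter_good: "\<exists>E. good (It n) E \<and> goodT (Tt n)"
proof (induction n)
  case 0
  have "good (\<lambda>\<nu> \<tau> \<mu>. 0) (\<lambda>_. 0)" unfolding good_def using Bb_nonneg by (auto simp: Rg_def)
  moreover have "goodT (\<lambda>\<tau>. 0)" unfolding goodT_def Tg_def using Ts_pos by auto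
  ultimately show ?case by (simp only: It_0 Tt_0) blast
next
  case (Suc n)
  then obtain E where E: "good (It n) E" "goodT (Tt n)" by blast
  have g1: "good (It (Suc n)) (CE E (Tt n))" unfolding It_Suc by (rule step_good[OF E])
  moreover have "goodT (Tt (Suc n))" unfolding Tt_Suc by (rule stepT_good[OF g1])
  ultimately show ?case by blast
qed

lemma goodT_Tt: "goodT (Tt n)" using iter_good by blast

lemma iter_mono: "(\<forall>\<nu> \<tau> \<mu>. Rg \<nu> \<tau> \<mu> \<longrightarrow> It n \<nu> \<tau> \<mu> \<le> It (Suc n) \<nu> \<tau> \<mu>) \<and> (\<forall>t\<in>{0..Z}. Tt n t \<le> Tt (Suc n) t)"
proof (induction n)
  case 0
  obtain E where E: "good (It 1) E" "goodT (Tt 1)" using iter_good by blast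
  have a: "0 \<le> It 1 \<nu> \<tau> \<mu>" if "Rg \<nu> \<tau> \<mu>" for \<nu> \<tau> \<mu>
    using E(1) that unfolding good_def by blast
  have b: "0 \<le> Tt 1 t" if "t \<in> {0..Z}" for t
    using E(2) that unfolding goodT_def by blast
  show ?case using a b by (simp only: It_0 Tt_0 One_nat_def) blast
next
  case (Suc n)
  obtain E0 where E0: "good (It n) E0" "goodT (Tt n)" using iter_good by blast
  obtain E1 where E1: "good (It (Suc n)) E1" "goodT (Tt (Suc n))" using iter_good by blast
  obtain E2 where E2: "good (It (Suc (Suc n))) E2" "goodT (Tt (Suc (Suc n)))" using iter_good by blast
  have A: "It (Suc n) \<nu> \<tau> \<mu> \<le> It (Suc (Suc n)) \<nu> \<tau> \<mu>" if R: "Rg \<nu> \<tau> \<mu>" for \<nu> \<tau> \<mu>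
    unfolding It_Suc[of n] It_Suc[of "Suc n"]
    by (rule step_mono[OF E0(1) E1(1)[unfolded It_Suc] E0(2) E1(2) _ _ R])
       (use Suc in \<open>auto simp del: rte_iter.simps simp: It_Suc\<close>)
  have B: "Tt (Suc n) t \<le> Tt (Suc (Suc n)) t" if t: "t \<in> {0..Z}" for t
    unfolding Tt_Suc[of n] Tt_Suc[of "Suc n"]
    by (rule stepT_mono[OF E1(1) E2(1) t]) (use A in auto)
  show ?case using A B by blast
qed

end

context rte begin

definition Ilim :: "real \<Rightarrow> real \<Rightarrow> real \<Rightarrow> real" where "Ilim \<nu> \<tau> \<mu> = lim (\<lambda>n. It n \<nu> \<tau> \<mu>)"
definition Tlim :: "real \<Rightarrow> real" where "Tlim \<tau> = lim (\<lambda>n. Tt n \<tau>)"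

definition EEs where "EEs = (SOME EE. \<forall>n. good (It n) (EE n))"

lemma EEs_good: "good (It n) (EEs n)"
proof -
  have "\<exists>EE. \<forall>n. good (It n) (EE n)" using iter_good by metis
  from someI_ex[OF this] have "\<forall>n. good (It n) (EEs n)" unfolding EEs_def .
  then show ?thesis by blast
qed

lemma EEs_meas[measurable]: "EEs n \<in> borel_measurable (borel \<Otimes>\<^sub>M (borel \<Otimes>\<^sub>M borel))"
  using EEs_good by (simp add: good_def)

lemma It_conv: assumes "Rg \<nu> \<tau> \<mu>" shows "(\<lambda>n. It n \<nu> \<tau> \<mu>) \<longlonglongrightarrow> Ilim \<nu> \<tau> \<mu>"
proof -
  have inc: "incseq (\<lambda>n. It n \<nu> \<tau> \<mu>)" by (rule incseq_SucI) (use iter_mono assms in blast)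
  have "bdd_above (range (\<lambda>n. It n \<nu> \<tau> \<mu>))"
    using EEs_good assms unfolding good_def by (intro bdd_aboveI[of _ "Bb \<nu>"]) blast
  then have "convergent (\<lambda>n. It n \<nu> \<tau> \<mu>)" using LIMSEQ_incseq_SUP[OF _ inc] by (auto simp: convergent_def)
  then show ?thesis unfolding Ilim_def by (simp add: convergent_LIMSEQ_iff)
qed

lemma Tt_conv: assumes "t \<in> {0..Z}" shows "(\<lambda>n. Tt n t) \<longlonglongrightarrow> Tlim t"
proof -
  have inc: "incseq (\<lambda>n. Tt n t)" by (rule incseq_SucI) (use iter_mono assms in blast)
  have "bdd_above (range (\<lambda>n. Tt n t))"
    using goodT_Tt assms unfolding goodT_def by (intro bdd_aboveI[of _ Ts]) blast
  then have "convergent (\<lambda>n. Tt n t)" using LIMSEQ_incseq_SUP[OF _ inc] by (auto simp: convergent_def)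
  then show ?thesis unfolding Tlim_def by (simp add: convergent_LIMSEQ_iff)
qed

definition Elim where "Elim x = lim (\<lambda>n. EEs n x)"

lemma good_lim: "good Ilim Elim"
  unfolding good_def
proof (intro conjI allI impI)
  show "Elim \<in> borel_measurable (borel \<Otimes>\<^sub>M (borel \<Otimes>\<^sub>M borel))" unfolding Elim_def by measurable
  fix \<nu> \<tau> \<mu> assume R: "Rg \<nu> \<tau> \<mu>"
  have e: "EEs n (\<nu>, \<tau>, \<mu>) = It n \<nu> \<tau> \<mu>" for n using EEs_good[of n] R unfolding good_def by metis
  show "Ilim \<nu> \<tau> \<mu> = Elim (\<nu>, \<tau>, \<mu>)" by (simp add: Ilim_def Elim_def e)
  have b: "0 \<le> It n \<nu> \<tau> \<mu> \<and> It n \<nu> \<tau> \<mu> \<le> Bb \<nu>" for n using EEs_good[of n] R unfolding good_def by metis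
  show "0 \<le> Ilim \<nu> \<tau> \<mu>" using b by (intro LIMSEQ_le_const[OF It_conv[OF R]]) auto
  show "Ilim \<nu> \<tau> \<mu> \<le> Bb \<nu>" using b by (intro LIMSEQ_le_const2[OF It_conv[OF R]]) auto
qed

lemma goodT_lim: "goodT Tlim"
  unfolding goodT_def
proof (intro conjI ballI)
  have gT: "Tg (Tt n) \<in> borel_measurable borel" for n using goodT_Tt by (simp add: goodT_def)
  have "Tg Tlim = (\<lambda>t. lim (\<lambda>n. Tg (Tt n) t))"
    by (auto simp: fun_eq_iff Tg_def Tlim_def)
  also have "\<dots> \<in> borel_measurable borel" using gT by measurable
  finally show "Tg Tlim \<in> borel_measurable borel" .
  fix t assume t: "t \<in> {0..Z}"
  have b: "0 \<le> Tt n t \<and> Tt n t \<le> Ts" for n using goodT_Tt t unfolding goodT_def by blast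
  show "0 \<le> Tlim t" using b by (intro LIMSEQ_le_const[OF Tt_conv[OF t]]) auto
  show "Tlim t \<le> Ts" using b by (intro LIMSEQ_le_const2[OF Tt_conv[OF t]]) auto
qed

lemma Ec_lim: assumes "\<nu> > 0" "t \<in> {0..Z}"
  shows "(\<lambda>n. Ec (EEs n) (\<nu>, t, x)) \<longlonglongrightarrow> Ec Elim (\<nu>, t, x)"
proof (cases "x \<in> {-1<..<1}")
  case True
  have R: "Rg \<nu> t x" using assms True by (simp add: Rg_def)
  have "Ec (EEs n) (\<nu>, t, x) = It n \<nu> t x" for n
    using good_Ec(1)[OF EEs_good assms True] by simp
  moreover have "Ec Elim (\<nu>, t, x) = Ilim \<nu> t x" using good_Ec(1)[OF good_lim assms True] by simp
  ultimately show ?thesis using It_conv[OF R] by simp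
qed (auto simp: Ec_def)

lemma JE_lim: assumes "\<nu> > 0" "t \<in> {0..Z}"
  shows "(\<lambda>n. JE (EEs n) \<nu> t) \<longlonglongrightarrow> JE Elim \<nu> t"
proof -
  have b: "\<And>n x. x \<in> {-1..1} \<Longrightarrow> \<bar>Ec (EEs n) (\<nu>, t, x)\<bar> \<le> Bb \<nu>"
    using good_Ec(2)[OF EEs_good assms] by (simp add: abs_le_iff)
  have "(\<lambda>n. LINT x:{-1..1}|lborel. 1 * Ec (EEs n) (\<nu>, t, x)) \<longlonglongrightarrow> (LINT x:{-1..1}|lborel. 1 * Ec Elim (\<nu>, t, x))"
    by (rule kint_lim[where C="Bb \<nu>", OF continuous_on_const good_Ec(3)[OF EEs_good assms] good_Ec(3)[OF good_lim assms] b Ec_lim[OF assms]])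
  then show ?thesis unfolding JE_def by (intro tendsto_mult_left) simp
qed

lemma KE_lim: assumes "\<nu> > 0" "t \<in> {0..Z}"
  shows "(\<lambda>n. KE (EEs n) \<nu> t) \<longlonglongrightarrow> KE Elim \<nu> t"
proof -
  have b: "\<And>n x. x \<in> {-1..1} \<Longrightarrow> \<bar>Ec (EEs n) (\<nu>, t, x)\<bar> \<le> Bb \<nu>"
    using good_Ec(2)[OF EEs_good assms] by (simp add: abs_le_iff)
  have c2: "continuous_on UNIV (\<lambda>x::real. x^2)" by (intro continuous_intros)
  have "(\<lambda>n. LINT x:{-1..1}|lborel. x^2 * Ec (EEs n) (\<nu>, t, x)) \<longlonglongrightarrow> (LINT x:{-1..1}|lborel. x^2 * Ec Elim (\<nu>, t, x))"
    by (rule kint_lim[where C="Bb \<nu>", OF c2 good_Ec(3)[OF EEs_good assms] good_Ec(3)[OF good_lim assms] b Ec_lim[OF assms]])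
  then show ?thesis unfolding KE_def by (intro tendsto_mult_left)
qed

lemma src_lim: assumes "\<nu> > 0" "t \<in> {0..Z}"
  shows "(\<lambda>n. src hb c kB \<kappa> ai ar (It n) (Tt n) \<nu> t \<mu>) \<longlonglongrightarrow> src hb c kB \<kappa> ai ar Ilim Tlim \<nu> t \<mu>"
proof -
  have Bl: "(\<lambda>n. B \<nu> (Tg (Tt n) t)) \<longlonglongrightarrow> B \<nu> (Tg Tlim t)"
  proof -
    have "(\<lambda>n. B \<nu> (Tt n t)) \<longlonglongrightarrow> B \<nu> (Tlim t)"
      by (rule planck_tendsto[OF phys assms(1) _ Tt_conv[OF assms(2)]]) (use goodT_Tt assms(2) in \<open>auto simp: goodT_def\<close>)
    then show ?thesis using assms(2) by (simp add: Tg_def)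
  qed
  have "(\<lambda>n. Sx (EEs n) (Tt n) \<nu> t \<mu>) \<longlonglongrightarrow> Sx Elim Tlim \<nu> t \<mu>"
    unfolding Sx_def SE_def
    by (intro tendsto_intros Bl JE_lim[OF assms] KE_lim[OF assms])
  then show ?thesis using src_eq[OF EEs_good assms] src_eq[OF good_lim assms] by simp
qed

lemma mild: "mild_solution \<kappa> Qp Qm Z (src hb c kB \<kappa> ai ar Ilim Tlim) Ilim"
  unfolding mild_solution_def
proof (intro allI impI)
  fix \<nu> \<tau> \<mu> :: real assume h: "0 < \<nu> \<and> \<tau> \<in> {0..Z} \<and> \<mu> \<in> {- 1<..<1} \<and> \<mu> \<noteq> 0"
  then have R: "Rg \<nu> \<tau> \<mu>" by (simp add: Rg_def)
  have r: "\<nu> > 0" "\<bar>\<mu>\<bar> \<le> 1" using h by auto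
  have "(\<lambda>n. step (It n) (Tt n) \<nu> \<tau> \<mu>) \<longlonglongrightarrow> step Ilim Tlim \<nu> \<tau> \<mu>"
  proof (rule charsol_lim[OF R, where C="\<kappa> \<nu> * Bb \<nu>"])
    show "msec (src hb c kB \<kappa> ai ar (It n) (Tt n)) \<nu> \<mu>" for n by (rule msec_src[OF EEs_good goodT_Tt r(1)])
    show "msec (src hb c kB \<kappa> ai ar Ilim Tlim) \<nu> \<mu>" by (rule msec_src[OF good_lim goodT_lim r(1)])
    show "\<bar>src hb c kB \<kappa> ai ar (It n) (Tt n) \<nu> t \<mu>\<bar> \<le> \<kappa> \<nu> * Bb \<nu>" if "t \<in> {0..Z}" for n t
      using src_bounds'[OF EEs_good goodT_Tt r(1) that r(2)] by auto
    show "(\<lambda>n. src hb c kB \<kappa> ai ar (It n) (Tt n) \<nu> t \<mu>) \<longlonglongrightarrow> src hb c kB \<kappa> ai ar Ilim Tlim \<nu> t \<mu>"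
      if "t \<in> {0..Z}" for t by (rule src_lim[OF r(1) that])
  qed
  moreover have "(\<lambda>n. step (It n) (Tt n) \<nu> \<tau> \<mu>) \<longlonglongrightarrow> Ilim \<nu> \<tau> \<mu>"
    using LIMSEQ_Suc[OF It_conv[OF R]] by (simp add: Let_def)
  ultimately show "Ilim \<nu> \<tau> \<mu> = charsol \<kappa> Qp Qm Z (src hb c kB \<kappa> ai ar Ilim Tlim) \<nu> \<tau> \<mu>"
    using LIMSEQ_unique by blast
qed

end

context rte begin

lemma wJE_nonneg: "good I E \<Longrightarrow> \<tau> \<in> {0..Z} \<Longrightarrow> 0 \<le> w \<nu> * JE E \<nu> \<tau>"
proof (cases "\<nu> > 0")
  case True
  assume "good I E" "\<tau> \<in> {0..Z}"
  then show ?thesis using JE_bounds[OF _ True] w_bd(1)[of \<nu>] by simp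
qed (simp add: w_def)

lemma wJE_bound: "good I E \<Longrightarrow> \<tau> \<in> {0..Z} \<Longrightarrow> norm (w \<nu> * JE E \<nu> \<tau>) \<le> \<kappa>M * (Bb \<nu> * indicator {0<..} \<nu>)"
proof (cases "\<nu> > 0")
  case True
  assume a: "good I E" "\<tau> \<in> {0..Z}"
  have "w \<nu> * JE E \<nu> \<tau> \<le> \<kappa>M * Bb \<nu>"
    using JE_bounds[OF a(1) True a(2)] w_bd[of \<nu>] by (intro mult_mono) auto
  then show ?thesis using wJE_nonneg[OF a] True by simp
qed (simp add: w_def)

lemma wJE_int: assumes "good I E" "\<tau> \<in> {0..Z}" shows "integrable lborel (\<lambda>\<nu>. w \<nu> * JE E \<nu> \<tau>)"
proof -
  have [measurable]: "E \<in> borel_measurable (borel \<Otimes>\<^sub>M (borel \<Otimes>\<^sub>M borel))" using assms by (simp add: good_def)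
  have "integrable lborel (\<lambda>\<nu>. \<kappa>M * (Bb \<nu> * indicator {0<..} \<nu>))"
    using B_integrable[of Ts] Ts_pos by (intro integrable_mult_right) (simp add: Bb_def)
  then show ?thesis
  proof (rule Bochner_Integration.integrable_bound)
    show "(\<lambda>\<nu>. w \<nu> * JE E \<nu> \<tau>) \<in> borel_measurable lborel" by measurable
    show "AE x in lborel. norm (w x * JE E x \<tau>) \<le> norm (\<kappa>M * (Bb x * indicator {0<..} x))"
    proof (rule AE_I2)
      fix x
      show "norm (w x * JE E x \<tau>) \<le> norm (\<kappa>M * (Bb x * indicator {0<..} x))"
        using wJE_bound[OF assms, of x] by (smt (verit) real_norm_def)
    qed
  qed
qed

lemma g_real: assumes "good I E" "\<tau> \<in> {0..Z}"
  shows "(\<integral>\<^sup>+\<nu>. ennreal (w \<nu> * JE E \<nu> \<tau>) \<partial>lborel) = ennreal (LINT \<nu>|lborel. w \<nu> * JE E \<nu> \<tau>)"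
  by (intro nn_integral_eq_integral wJE_int[OF assms] AE_I2 wJE_nonneg[OF assms])

lemma T_eq: assumes t: "\<tau> \<in> {0..Z}"
  shows "(\<integral>\<^sup>+ \<nu>. ennreal (\<kappa> \<nu> * (1 - (ai \<nu> + ar \<nu>)) * planck hb c kB \<nu> (Tlim \<tau>)) * indicator {0<..} \<nu> \<partial>lborel)
       = (\<integral>\<^sup>+ \<nu>. ennreal (\<kappa> \<nu> * (1 - (ai \<nu> + ar \<nu>)) * Jmom (Ilim \<nu>) \<tau>) * indicator {0<..} \<nu> \<partial>lborel)"
proof -
  define h where "h n = (LINT \<nu>|lborel. w \<nu> * JE (EEs n) \<nu> \<tau>)" for n
  define hL where "hL = (LINT \<nu>|lborel. w \<nu> * JE Elim \<nu> \<tau>)"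
  have T0: "0 \<le> Tlim \<tau>" using goodT_lim t by (simp add: goodT_def)
  have hlim: "h \<longlonglongrightarrow> hL"
    unfolding h_def hL_def
  proof (rule integral_dominated_convergence[where w="\<lambda>\<nu>. \<kappa>M * (Bb \<nu> * indicator {0<..} \<nu>)"])
    have [measurable]: "Elim \<in> borel_measurable (borel \<Otimes>\<^sub>M (borel \<Otimes>\<^sub>M borel))" using good_lim by (simp add: good_def)
    show "(\<lambda>\<nu>. w \<nu> * JE Elim \<nu> \<tau>) \<in> borel_measurable lborel" by measurable
    show "(\<lambda>\<nu>. w \<nu> * JE (EEs n) \<nu> \<tau>) \<in> borel_measurable lborel" for n by measurable
    show "integrable lborel (\<lambda>\<nu>. \<kappa>M * (Bb \<nu> * indicator {0<..} \<nu>))"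
      using B_integrable[of Ts] Ts_pos by (intro integrable_mult_right) (simp add: Bb_def)
    show "AE x in lborel. (\<lambda>n. w x * JE (EEs n) x \<tau>) \<longlonglongrightarrow> w x * JE Elim x \<tau>"
    proof (rule AE_I2)
      fix x :: real show "(\<lambda>n. w x * JE (EEs n) x \<tau>) \<longlonglongrightarrow> w x * JE Elim x \<tau>"
      proof (cases "x > 0")
        case True then show ?thesis by (intro tendsto_mult_left JE_lim[OF True t])
      qed (simp add: w_def)
    qed
    show "AE x in lborel. norm (w x * JE (EEs n) x \<tau>) \<le> \<kappa>M * (Bb x * indicator {0<..} x)" for n
      by (intro AE_I2 wJE_bound[OF EEs_good t])
  qed
  have fh: "f (Tt (Suc n) \<tau>) = h (Suc n)" for n
  proof -
    have "ennreal (f (Tt (Suc n) \<tau>)) = g (\<lambda>\<nu> \<tau>. Jmom (It (Suc n) \<nu>) \<tau>) \<tau>"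
      unfolding Tt_Suc by (rule stepT_bounds(2)[OF EEs_good t])
    also have "\<dots> = ennreal (h (Suc n))" unfolding h_def g_JE[OF EEs_good t] by (rule g_real[OF EEs_good t])
    finally have e: "ennreal (f (Tt (Suc n) \<tau>)) = ennreal (h (Suc n))" .
    have "0 \<le> h (Suc n)" unfolding h_def by (intro integral_nonneg_AE AE_I2 wJE_nonneg[OF EEs_good t])
    then show ?thesis using e f_nonneg ennreal_inj by blast
  qed
  have "(\<lambda>n. f (Tt n \<tau>)) \<longlonglongrightarrow> f (Tlim \<tau>)"
    by (rule continuous_on_tendsto_compose[OF f_cont Tt_conv[OF t]])
       (use T0 goodT_Tt t in \<open>auto simp: goodT_def\<close>)
  then have "(\<lambda>n. f (Tt (Suc n) \<tau>)) \<longlonglongrightarrow> f (Tlim \<tau>)" by (rule LIMSEQ_Suc)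
  moreover have "(\<lambda>n. f (Tt (Suc n) \<tau>)) \<longlonglongrightarrow> hL" unfolding fh using LIMSEQ_Suc[OF hlim] .
  ultimately have fT: "f (Tlim \<tau>) = hL" using LIMSEQ_unique by blast
  have "(\<integral>\<^sup>+ \<nu>. ennreal (\<kappa> \<nu> * (1 - (ai \<nu> + ar \<nu>)) * planck hb c kB \<nu> (Tlim \<tau>)) * indicator {0<..} \<nu> \<partial>lborel)
      = (\<integral>\<^sup>+\<nu>. ennreal (w \<nu> * B \<nu> (Tlim \<tau>)) \<partial>lborel)" by (rule nnint_w)
  also have "\<dots> = ennreal (f (Tlim \<tau>))" by (rule F_eq[OF T0])
  also have "\<dots> = ennreal hL" by (simp add: fT)
  also have "\<dots> = (\<integral>\<^sup>+\<nu>. ennreal (w \<nu> * JE Elim \<nu> \<tau>) \<partial>lborel)" unfolding hL_def by (rule g_real[OF good_lim t, symmetric])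
  also have "\<dots> = g (\<lambda>\<nu> \<tau>. Jmom (Ilim \<nu>) \<tau>) \<tau>" by (rule g_JE[OF good_lim t, symmetric])
  also have "\<dots> = (\<integral>\<^sup>+ \<nu>. ennreal (\<kappa> \<nu> * (1 - (ai \<nu> + ar \<nu>)) * Jmom (Ilim \<nu>) \<tau>) * indicator {0<..} \<nu> \<partial>lborel)"
    unfolding g_def by (rule nnint_w[symmetric])
  finally show ?thesis .
qed

lemma main:
  shows
    "(\<forall>n \<nu> \<tau> \<mu>. \<nu> > 0 \<and> \<tau> \<in> {0..Z} \<and> \<mu> \<in> {-1<..<1} \<and> \<mu> \<noteq> 0 \<longrightarrow>
        fst (rte_iter hb c kB \<kappa> ai ar Qp Qm Z n) \<nu> \<tau> \<mu>
          \<le> fst (rte_iter hb c kB \<kappa> ai ar Qp Qm Z (Suc n)) \<nu> \<tau> \<mu>)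
   \<and> (\<forall>n \<tau>. \<tau> \<in> {0..Z} \<longrightarrow>
        snd (rte_iter hb c kB \<kappa> ai ar Qp Qm Z n) \<tau>
          \<le> snd (rte_iter hb c kB \<kappa> ai ar Qp Qm Z (Suc n)) \<tau>)
   \<and> (\<exists>I T.
        (\<forall>\<nu> \<tau> \<mu>. \<nu> > 0 \<and> \<tau> \<in> {0..Z} \<and> \<mu> \<in> {-1<..<1} \<and> \<mu> \<noteq> 0 \<longrightarrow>
           (\<lambda>n. fst (rte_iter hb c kB \<kappa> ai ar Qp Qm Z n) \<nu> \<tau> \<mu>) \<longlonglongrightarrow> I \<nu> \<tau> \<mu>)
      \<and> (\<forall>\<tau>. \<tau> \<in> {0..Z} \<longrightarrow>
           (\<lambda>n. snd (rte_iter hb c kB \<kappa> ai ar Qp Qm Z n) \<tau>) \<longlonglongrightarrow> T \<tau>)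
      \<and> mild_solution \<kappa> Qp Qm Z (src hb c kB \<kappa> ai ar I T) I
      \<and> (\<forall>\<tau>. \<tau> \<in> {0..Z} \<longrightarrow> T \<tau> \<ge> 0 \<and>
           (\<integral>\<^sup>+ \<nu>. ennreal (\<kappa> \<nu> * (1 - (ai \<nu> + ar \<nu>)) * planck hb c kB \<nu> (T \<tau>)) * indicator {0<..} \<nu> \<partial>lborel)
         = (\<integral>\<^sup>+ \<nu>. ennreal (\<kappa> \<nu> * (1 - (ai \<nu> + ar \<nu>)) * Jmom (I \<nu>) \<tau>) * indicator {0<..} \<nu> \<partial>lborel)))"
proof (intro conjI)
  show "\<forall>n \<nu> \<tau> \<mu>. \<nu> > 0 \<and> \<tau> \<in> {0..Z} \<and> \<mu> \<in> {-1<..<1} \<and> \<mu> \<noteq> 0 \<longrightarrow> It n \<nu> \<tau> \<mu> \<le> It (Suc n) \<nu> \<tau> \<mu>"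
    using iter_mono by (auto simp: Rg_def simp del: rte_iter.simps)
  show "\<forall>n \<tau>. \<tau> \<in> {0..Z} \<longrightarrow> Tt n \<tau> \<le> Tt (Suc n) \<tau>"
    using iter_mono by (auto simp del: rte_iter.simps)
  show "\<exists>I T.
        (\<forall>\<nu> \<tau> \<mu>. \<nu> > 0 \<and> \<tau> \<in> {0..Z} \<and> \<mu> \<in> {-1<..<1} \<and> \<mu> \<noteq> 0 \<longrightarrow> (\<lambda>n. It n \<nu> \<tau> \<mu>) \<longlonglongrightarrow> I \<nu> \<tau> \<mu>)
      \<and> (\<forall>\<tau>. \<tau> \<in> {0..Z} \<longrightarrow> (\<lambda>n. Tt n \<tau>) \<longlonglongrightarrow> T \<tau>)
      \<and> mild_solution \<kappa> Qp Qm Z (src hb c kB \<kappa> ai ar I T) I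
      \<and> (\<forall>\<tau>. \<tau> \<in> {0..Z} \<longrightarrow> T \<tau> \<ge> 0 \<and>
           (\<integral>\<^sup>+ \<nu>. ennreal (\<kappa> \<nu> * (1 - (ai \<nu> + ar \<nu>)) * planck hb c kB \<nu> (T \<tau>)) * indicator {0<..} \<nu> \<partial>lborel)
         = (\<integral>\<^sup>+ \<nu>. ennreal (\<kappa> \<nu> * (1 - (ai \<nu> + ar \<nu>)) * Jmom (I \<nu>) \<tau>) * indicator {0<..} \<nu> \<partial>lborel))"
  proof (intro exI[of _ Ilim] exI[of _ Tlim] conjI allI impI)
    show "(\<lambda>n. It n \<nu> \<tau> \<mu>) \<longlonglongrightarrow> Ilim \<nu> \<tau> \<mu>"
      if "\<nu> > 0 \<and> \<tau> \<in> {0..Z} \<and> \<mu> \<in> {-1<..<1} \<and> \<mu> \<noteq> 0" for \<nu> \<tau> \<mu>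
      using It_conv[of \<nu> \<tau> \<mu>] that by (simp add: Rg_def del: rte_iter.simps)
    show "(\<lambda>n. Tt n \<tau>) \<longlonglongrightarrow> Tlim \<tau>" if "\<tau> \<in> {0..Z}" for \<tau> using Tt_conv that by blast
    show "mild_solution \<kappa> Qp Qm Z (src hb c kB \<kappa> ai ar Ilim Tlim) Ilim" by (rule mild)
    show "Tlim \<tau> \<ge> 0" if "\<tau> \<in> {0..Z}" for \<tau> using goodT_lim that by (simp add: goodT_def)
    show "(\<integral>\<^sup>+ \<nu>. ennreal (\<kappa> \<nu> * (1 - (ai \<nu> + ar \<nu>)) * planck hb c kB \<nu> (Tlim \<tau>)) * indicator {0<..} \<nu> \<partial>lborel)
         = (\<integral>\<^sup>+ \<nu>. ennreal (\<kappa> \<nu> * (1 - (ai \<nu> + ar \<nu>)) * Jmom (Ilim \<nu>) \<tau>) * indicator {0<..} \<nu> \<partial>lborel)"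
      if "\<tau> \<in> {0..Z}" for \<tau> by (rule T_eq[OF that])
  qed
qed

end

theorem theorem2:
  fixes hb c kB Z \<kappa>M TM Qc :: real
    and \<kappa> ai ar :: "real \<Rightarrow> real"
    and Qp Qm :: "real \<Rightarrow> real \<Rightarrow> real"
  assumes phys: "hb > 0" "c > 0" "kB > 0"
    and Z: "Z > 0"
    and meas_\<kappa>: "\<kappa> \<in> borel_measurable (restrict_space borel {0<..})"
    and meas_ai: "ai \<in> borel_measurable (restrict_space borel {0<..})"
    and meas_ar: "ar \<in> borel_measurable (restrict_space borel {0<..})"
    and \<kappa>_bd: "\<And>\<nu>. \<nu> > 0 \<Longrightarrow> 0 < \<kappa> \<nu> \<and> \<kappa> \<nu> \<le> \<kappa>M"
    and a_bd: "\<And>\<nu>. \<nu> > 0 \<Longrightarrow> ai \<nu> \<ge> 0 \<and> ar \<nu> \<ge> 0 \<and> ai \<nu> + ar \<nu> < 1"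
    and meas_Qp: "(\<lambda>(\<mu>, \<nu>). Qp \<nu> \<mu>) \<in> borel_measurable (restrict_space borel ({0<..<1} \<times> {0<..}))"
    and meas_Qm: "(\<lambda>(\<mu>, \<nu>). Qm \<nu> \<mu>) \<in> borel_measurable (restrict_space borel ({0<..<1} \<times> {0<..}))"
    and TM: "TM > 0" and Qc: "Qc > 0"
    and Q_bd: "\<And>\<mu> \<nu>. \<mu> \<in> {0<..<1} \<Longrightarrow> \<nu> > 0 \<Longrightarrow>
        0 \<le> Qp \<nu> \<mu> \<and> Qp \<nu> \<mu> \<le> Qc * planck hb c kB \<nu> TM \<and>
        0 \<le> Qm \<nu> \<mu> \<and> Qm \<nu> \<mu> \<le> Qc * planck hb c kB \<nu> TM"
  shows
    "(\<forall>n \<nu> \<tau> \<mu>. \<nu> > 0 \<and> \<tau> \<in> {0..Z} \<and> \<mu> \<in> {-1<..<1} \<and> \<mu> \<noteq> 0 \<longrightarrow>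
        fst (rte_iter hb c kB \<kappa> ai ar Qp Qm Z n) \<nu> \<tau> \<mu>
          \<le> fst (rte_iter hb c kB \<kappa> ai ar Qp Qm Z (Suc n)) \<nu> \<tau> \<mu>)
   \<and> (\<forall>n \<tau>. \<tau> \<in> {0..Z} \<longrightarrow>
        snd (rte_iter hb c kB \<kappa> ai ar Qp Qm Z n) \<tau>
          \<le> snd (rte_iter hb c kB \<kappa> ai ar Qp Qm Z (Suc n)) \<tau>)
   \<and> (\<exists>I T.
        (\<forall>\<nu> \<tau> \<mu>. \<nu> > 0 \<and> \<tau> \<in> {0..Z} \<and> \<mu> \<in> {-1<..<1} \<and> \<mu> \<noteq> 0 \<longrightarrow>
           (\<lambda>n. fst (rte_iter hb c kB \<kappa> ai ar Qp Qm Z n) \<nu> \<tau> \<mu>) \<longlonglongrightarrow> I \<nu> \<tau> \<mu>)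
      \<and> (\<forall>\<tau>. \<tau> \<in> {0..Z} \<longrightarrow>
           (\<lambda>n. snd (rte_iter hb c kB \<kappa> ai ar Qp Qm Z n) \<tau>) \<longlonglongrightarrow> T \<tau>)
      \<and> mild_solution \<kappa> Qp Qm Z (src hb c kB \<kappa> ai ar I T) I
      \<and> (\<forall>\<tau>. \<tau> \<in> {0..Z} \<longrightarrow> T \<tau> \<ge> 0 \<and>
           (\<integral>\<^sup>+ \<nu>. ennreal (\<kappa> \<nu> * (1 - (ai \<nu> + ar \<nu>)) * planck hb c kB \<nu> (T \<tau>)) * indicator {0<..} \<nu> \<partial>lborel)
         = (\<integral>\<^sup>+ \<nu>. ennreal (\<kappa> \<nu> * (1 - (ai \<nu> + ar \<nu>)) * Jmom (I \<nu>) \<tau>) * indicator {0<..} \<nu> \<partial>lborel)))"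
proof -
  interpret rte hb c kB Z \<kappa>M TM Qc \<kappa> ai ar Qp Qm
    by (rule rte.intro) (use phys Z meas_\<kappa> meas_ai meas_ar \<kappa>_bd a_bd meas_Qp meas_Qm TM Qc Q_bd in auto)
  show ?thesis by (rule main)
qed

end
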